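(* Let $d\ge 1$ be an integer, let $\epsilon>0$, $\mu>-1$, $\alpha>0$, and put $\lambda:=\frac{d+1}{2}+\alpha$ and $C_{\lambda,\mu}:=\frac{2^{\lambda}\Gamma(\lambda)\Gamma(\mu+1)}{\Gamma(2\lambda+\mu)}$. Let $\widehat{\phi_{\mu,\alpha}^{(\epsilon)}}$ be the $d$-dimensional radial Fourier transform of the generalised Wendland function $\phi_{\mu,\alpha}^{(\epsilon)}$ (defined in the context). For $\gamma>0$ and $r>0$ define $$I_{\gamma}(r):=(2\pi)^{\frac d2}\int_0^r z\,J_\gamma^2(z)\,\widehat{\phi_{\mu,\alpha}^{(\epsilon)}}(z)\,dz .$$ Then $$I_{\gamma}(r)=(2\pi)^{\frac d2}\frac{C_{\lambda,\mu}\left(2^{\gamma}\Gamma(\gamma+1)\right)^{-2}}{\sqrt{2\pi}\,\epsilon^{d}}\,\frac{r^{2(\gamma+1)}}{2(\gamma+1)}\sum_{\ell=0}^{\infty}\frac{(\gamma+1)_\ell(\lambda)_\ell\left(-\frac{r^2}{4\epsilon^2}\right)^{\ell}}{(\gamma+2)_\ell\left(\lambda+\frac{\mu}{2}\right)_\ell\left(\lambda+\frac{\mu+1}{2}\right)_\ell\,\ell!}\;{}_2F_3\!\left(\gamma+1+\ell,\gamma+\tfrac12;\gamma+2+\ell,\gamma+1,2\gamma+1;-r^2\right).$$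
   Context: $J_\nu$ denotes the Bessel function of the first kind of order $\nu$. For $\epsilon>0$, $\mu>-1$, $\alpha>0$, the generalised Wendland function is $$\phi_{\mu,\alpha}^{(\epsilon)}(r):=\frac{1}{2^{\alpha-1}\Gamma(\alpha)}\int_{\epsilon r}^{1}(1-t)^{\mu}\,t\,\left(t^2-(\epsilon r)^2\right)^{\alpha-1}dt\quad\text{for } r\in[0,1/\epsilon],$$ and $\phi_{\mu,\alpha}^{(\epsilon)}(r)=0$ for $r>1/\epsilon$. Its $d$-dimensional radial Fourier transform is $\widehat{\phi}(z)=z^{1-\frac d2}\int_0^\infty \phi(y)\,y^{\frac d2}J_{\frac d2-1}(yz)\,dy$, which is known to equal $\frac{C_{\lambda,\mu}}{\sqrt{2\pi}\epsilon^d}\,{}_1F_2\!\left(\lambda;\lambda+\frac{\mu}{2},\lambda+\frac{\mu+1}{2};-\left(\frac{z}{2\epsilon}\right)^2\right)$. Here $(c)_n=\Gamma(c+n)/\Gamma(c)$ is the Pochhammer symbol and ${}_pF_q(a_1,\dots,a_p;b_1,\dots,b_q;z)=\sum_{j\ge0}\frac{\prod_i(a_i)_j}{\prod_i(b_i)_j}\frac{z^j}{j!}$ the generalised hypergeometric function. *)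

theory Defs
  imports "HOL-Analysis.Analysis"
begin

text \<open>At x = 0 we use the limiting value
  (1 if nu = 0, else 0); this point is irrelevant for all integrals below.\<close>
definition besselJ :: "real \<Rightarrow> real \<Rightarrow> real" where
  "besselJ \<nu> x =
     (if x = 0 then (if \<nu> = 0 then 1 else 0)
      else (\<Sum>k. (-1) ^ k * rGamma (real k + \<nu> + 1) / fact k * (x / 2) powr (2 * real k + \<nu>)))"

definition hypergeom :: "real list \<Rightarrow> real list \<Rightarrow> real \<Rightarrow> real" where
  "hypergeom as bs z =
     (\<Sum>j. prod_list (map (\<lambda>a. pochhammer a j) as) / prod_list (map (\<lambda>b. pochhammer b j) bs)
            * z ^ j / fact j)"

definition wendland :: "real \<Rightarrow> real \<Rightarrow> real \<Rightarrow> real \<Rightarrow> real" where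
  "wendland \<mu> \<alpha> \<epsilon> r =
     (if r \<le> 1 / \<epsilon> then
        1 / (2 powr (\<alpha> - 1) * Gamma \<alpha>) *
        integral {\<epsilon> * r..1} (\<lambda>t. (1 - t) powr \<mu> * t * (t\<^sup>2 - (\<epsilon> * r)\<^sup>2) powr (\<alpha> - 1))
      else 0)"

definition radial_FT :: "nat \<Rightarrow> (real \<Rightarrow> real) \<Rightarrow> real \<Rightarrow> real" where
  "radial_FT d \<phi> z =
     z powr (1 - real d / 2) *
     integral {0..} (\<lambda>y. \<phi> y * y powr (real d / 2) * besselJ (real d / 2 - 1) (y * z))"

end

theory Submission
  imports Defs
begin


lemma summable_ratio_fact:
  fixes f :: "nat \<Rightarrow> real"
  assumes c: "c \<ge> 0" and r: "\<And>n. \<bar>f (Suc n)\<bar> \<le> c / real (Suc n) * \<bar>f n\<bar>"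
  shows "summable (\<lambda>n. \<bar>f n\<bar>)"
proof -
  have b: "\<bar>f n\<bar> \<le> \<bar>f 0\<bar> * (inverse (fact n) * c ^ n)" for n
  proof (induction n)
    case 0 then show ?case by simp
  next
    case (Suc n)
    have "\<bar>f (Suc n)\<bar> \<le> c / real (Suc n) * \<bar>f n\<bar>" by (rule r)
    also have "\<dots> \<le> c / real (Suc n) * (\<bar>f 0\<bar> * (inverse (fact n) * c ^ n))"
      using Suc c by (intro mult_left_mono) auto
    also have "\<dots> = \<bar>f 0\<bar> * (inverse (fact (Suc n)) * c ^ Suc n)"
      by (simp add: field_simps)
    finally show ?case .
  qed
  have "summable (\<lambda>n. \<bar>f 0\<bar> * (inverse (fact n) * c ^ n))"
    by (intro summable_mult summable_exp)
  then show ?thesis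
    by (rule summable_comparison_test') (use b in auto)
qed

lemma rGamma_shift:
  fixes z :: real
  assumes "z > 0"
  shows "rGamma (z + of_nat k) = rGamma z / pochhammer z k"
proof -
  have "pochhammer z k > 0" using assms by (intro pochhammer_pos)
  then show ?thesis using pochhammer_rGamma[of z k] by (simp add: field_simps)
qed

lemma bessel_summable:
  fixes \<nu> w :: real
  assumes "\<nu> > -1"
  shows "summable (\<lambda>k. \<bar>(- w) ^ k / (pochhammer (\<nu> + 1) k * fact k)\<bar>)"
proof (rule summable_ratio_fact[where c = "\<bar>w\<bar> / (\<nu> + 1)"])
  show "0 \<le> \<bar>w\<bar> / (\<nu> + 1)" using assms by simp
  fix n
  have p: "pochhammer (\<nu> + 1) n > 0" using assms by (intro pochhammer_pos) simp
  have q: "\<nu> + 1 \<le> \<nu> + 1 + real n" by simp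
  have f: "fact n > (0::real)" by simp
  define a where "a = \<bar>w\<bar> ^ n / (pochhammer (\<nu> + 1) n * fact n)"
  have a0: "a \<ge> 0" using p f by (simp add: a_def)
  have e1: "pochhammer (\<nu> + 1) (Suc n) = pochhammer (\<nu> + 1) n * (\<nu> + 1 + real n)"
    by (simp add: pochhammer_rec')
  have e2: "fact (Suc n) = real (Suc n) * (fact n :: real)" by (rule fact_Suc)
  have pos: "pochhammer (\<nu> + 1) n * (\<nu> + 1 + real n) * (real (Suc n) * fact n) > 0"
    using p f assms by (intro mult_pos_pos) auto
  have "\<bar>(- w) ^ Suc n / (pochhammer (\<nu> + 1) (Suc n) * fact (Suc n))\<bar>
      = \<bar>w\<bar> ^ Suc n / (pochhammer (\<nu> + 1) n * (\<nu> + 1 + real n) * (real (Suc n) * fact n))"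
    unfolding e1 e2 abs_divide power_abs abs_minus_cancel using pos by simp
  also have "\<dots> = a * (\<bar>w\<bar> / ((\<nu> + 1 + real n) * real (Suc n)))"
    unfolding a_def using p assms by (simp add: field_simps)
  also have "\<dots> \<le> a * (\<bar>w\<bar> / ((\<nu> + 1) * real (Suc n)))"
    using assms a0 by (intro mult_left_mono divide_left_mono mult_right_mono mult_pos_pos) auto
  also have "\<dots> = \<bar>w\<bar> / (\<nu> + 1) / real (Suc n) * \<bar>(- w) ^ n / (pochhammer (\<nu> + 1) n * fact n)\<bar>"
  proof -
    have "\<bar>(- w) ^ n / (pochhammer (\<nu> + 1) n * fact n)\<bar> = a"
      unfolding a_def abs_divide power_abs abs_minus_cancel using p f by simp
    then show ?thesis by simp
  qed
  finally show "\<bar>(- w) ^ Suc n / (pochhammer (\<nu> + 1) (Suc n) * fact (Suc n))\<bar>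
      \<le> \<bar>w\<bar> / (\<nu> + 1) / real (Suc n) * \<bar>(- w) ^ n / (pochhammer (\<nu> + 1) n * fact n)\<bar>" .
qed

lemma besselJ_series:
  fixes \<nu> x :: real
  assumes "\<nu> > -1" "x > 0"
  shows "besselJ \<nu> x = (x / 2) powr \<nu> * rGamma (\<nu> + 1) *
           (\<Sum>k. (- (x\<^sup>2 / 4)) ^ k / (pochhammer (\<nu> + 1) k * fact k))"
proof -
  have eq: "(-1) ^ k * rGamma (real k + \<nu> + 1) / fact k * (x / 2) powr (2 * real k + \<nu>)
        = ((x / 2) powr \<nu> * rGamma (\<nu> + 1)) * ((- (x\<^sup>2 / 4)) ^ k / (pochhammer (\<nu> + 1) k * fact k))" for k
  proof -
    have r: "rGamma (real k + \<nu> + 1) = rGamma (\<nu> + 1) / pochhammer (\<nu> + 1) k"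
    proof -
      have e: "real k + \<nu> + 1 = (\<nu> + 1) + of_nat k" by simp
      show ?thesis unfolding e by (rule rGamma_shift) (use assms in simp)
    qed
    have "(x / 2) powr (2 * real k) = (x / 2) powr (real (2 * k))" by simp
    also have "\<dots> = (x / 2) ^ (2 * k)" by (rule powr_realpow) (use assms in simp)
    also have "\<dots> = (x\<^sup>2 / 4) ^ k" by (simp add: power_mult power_divide)
    finally have h: "(x / 2) powr (2 * real k) = (x\<^sup>2 / 4) ^ k" .
    have p: "(x / 2) powr (2 * real k + \<nu>) = (x/2) powr \<nu> * (x\<^sup>2 / 4) ^ k"
      unfolding powr_add h by simp
    have m: "(- (x\<^sup>2 / 4)) ^ k = (-1) ^ k * (x\<^sup>2 / 4) ^ k"
      by (rule power_minus)
    show ?thesis unfolding r p m by simp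
  qed
  have s: "summable (\<lambda>k. (- (x\<^sup>2 / 4)) ^ k / (pochhammer (\<nu> + 1) k * fact k))"
    by (rule summable_rabs_cancel[OF bessel_summable[OF assms(1)]])
  have "besselJ \<nu> x = (\<Sum>k. (-1) ^ k * rGamma (real k + \<nu> + 1) / fact k * (x / 2) powr (2 * real k + \<nu>))"
    unfolding besselJ_def using assms by (intro if_not_P) simp
  also have "\<dots> = (\<Sum>k. ((x / 2) powr \<nu> * rGamma (\<nu> + 1)) * ((- (x\<^sup>2 / 4)) ^ k / (pochhammer (\<nu> + 1) k * fact k)))"
    unfolding eq ..
  also have "\<dots> = (x / 2) powr \<nu> * rGamma (\<nu> + 1) * (\<Sum>k. (- (x\<^sup>2 / 4)) ^ k / (pochhammer (\<nu> + 1) k * fact k))"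
    by (rule suminf_mult[OF s])
  finally show ?thesis .
qed



lemma poch_ratio_minus:
  fixes g :: real
  assumes "i \<le> n" "pochhammer (\<gamma> + 1) i \<noteq> 0"
  shows "pochhammer (\<gamma> + 1) n / pochhammer (\<gamma> + 1) i = (-1) ^ (n - i) * pochhammer (- (\<gamma> + real n)) (n - i)"
proof -
  have "pochhammer (\<gamma> + 1) n = pochhammer (\<gamma> + 1) i * pochhammer (\<gamma> + 1 + of_nat i) (n - i)"
    by (rule pochhammer_product) (rule assms(1))
  moreover have "pochhammer (\<gamma> + 1 + of_nat i) (n - i) = pochhammer ((\<gamma> + real n) - of_nat (n - i) + 1) (n - i)"
    using assms(1) by (simp add: of_nat_diff algebra_simps)
  moreover have "pochhammer ((\<gamma> + real n) - of_nat (n - i) + 1) (n - i) = (-1) ^ (n - i) * pochhammer (- (\<gamma> + real n)) (n - i)"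
    by (rule pochhammer_minus')
  ultimately show ?thesis using assms(2) by simp
qed

lemma vandermonde_bessel:
  fixes \<gamma> :: real
  assumes "\<gamma> > 0"
  shows "(\<Sum>i\<le>n. 1 / (pochhammer (\<gamma> + 1) i * fact i * (pochhammer (\<gamma> + 1) (n - i) * fact (n - i))))
       = 4 ^ n * pochhammer (\<gamma> + 1/2) n / (pochhammer (\<gamma> + 1) n * pochhammer (2 * \<gamma> + 1) n * fact n)"
proof -
  define P where "P = pochhammer (\<gamma> + 1) n"
  have pp: "pochhammer (\<gamma> + 1) j > 0" for j using assms by (intro pochhammer_pos) simp
  have P0: "P > 0" unfolding P_def by (rule pp)
  have Q0: "pochhammer (2 * \<gamma> + 1) n > 0" using assms by (intro pochhammer_pos) simp
  have "P * P * fact n * (\<Sum>i\<le>n. 1 / (pochhammer (\<gamma> + 1) i * fact i * (pochhammer (\<gamma> + 1) (n - i) * fact (n - i))))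
      = (\<Sum>i\<le>n. of_nat (n choose i) * (P / pochhammer (\<gamma> + 1) i) * (P / pochhammer (\<gamma> + 1) (n - i)))"
    unfolding sum_distrib_left
  proof (rule sum.cong[OF refl])
    fix i assume "i \<in> {..n}"
    then have i: "i \<le> n" by simp
    have "real (n choose i) = fact n / (fact i * fact (n - i))"
      using binomial_fact[OF i] by simp
    then show "P * P * fact n * (1 / (pochhammer (\<gamma> + 1) i * fact i * (pochhammer (\<gamma> + 1) (n - i) * fact (n - i))))
        = of_nat (n choose i) * (P / pochhammer (\<gamma> + 1) i) * (P / pochhammer (\<gamma> + 1) (n - i))"
      using pp[of i] pp[of "n - i"] by (simp add: field_simps)
  qed
  also have "\<dots> = (\<Sum>i\<le>n. (-1) ^ n * (of_nat (n choose i) * pochhammer (- (\<gamma> + real n)) i * pochhammer (- (\<gamma> + real n)) (n - i)))"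
  proof (rule sum.cong[OF refl])
    fix i assume "i \<in> {..n}"
    then have i: "i \<le> n" by simp
    have e1: "P / pochhammer (\<gamma> + 1) i = (-1) ^ (n - i) * pochhammer (- (\<gamma> + real n)) (n - i)"
      unfolding P_def by (rule poch_ratio_minus[OF i]) (use pp[of i] in simp)
    have e2: "P / pochhammer (\<gamma> + 1) (n - i) = (-1) ^ (n - (n - i)) * pochhammer (- (\<gamma> + real n)) (n - (n - i))"
      unfolding P_def by (rule poch_ratio_minus) (use pp[of "n - i"] in simp_all)
    have e3: "n - (n - i) = i" using i by simp
    have e4: "(-1::real) ^ (n - i) * (-1) ^ i = (-1) ^ n"
      using i by (simp flip: power_add)
    show "of_nat (n choose i) * (P / pochhammer (\<gamma> + 1) i) * (P / pochhammer (\<gamma> + 1) (n - i))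
        = (-1) ^ n * (of_nat (n choose i) * pochhammer (- (\<gamma> + real n)) i * pochhammer (- (\<gamma> + real n)) (n - i))"
      unfolding e1 e2 e3 using e4 by (simp add: algebra_simps)
  qed
  also have "\<dots> = (-1) ^ n * pochhammer (- (\<gamma> + real n) + - (\<gamma> + real n)) n"
    unfolding pochhammer_binomial_sum[of "- (\<gamma> + real n)" "- (\<gamma> + real n)" n] sum_distrib_left ..
  also have "\<dots> = pochhammer (2 * \<gamma> + 1 + real n) n"
  proof -
    have B0: "pochhammer (- (2 * \<gamma> + 2 * real n)) n = (-1) ^ n * pochhammer ((2 * \<gamma> + 2 * real n) - of_nat n + 1) n"
      by (rule pochhammer_minus)
    have B1: "(2 * \<gamma> + 2 * real n) - of_nat n + 1 = 2 * \<gamma> + 1 + real n" by simp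
    have A: "- (\<gamma> + real n) + - (\<gamma> + real n) = - (2 * \<gamma> + 2 * real n)" by simp
    have M: "(-1::real)^n * (-1)^n = 1" by (simp flip: power_mult_distrib)
    show ?thesis unfolding A B0 B1 mult.assoc[symmetric] M by simp
  qed
  also have "\<dots> = 4 ^ n * pochhammer (\<gamma> + 1/2) n * P / pochhammer (2 * \<gamma> + 1) n"
  proof -
    have e1: "2 * (\<gamma> + 1/2) = 2 * \<gamma> + 1" and e2: "\<gamma> + 1/2 + 1/2 = \<gamma> + 1" by simp_all
    have e3: "(of_nat (2^(2*n)) :: real) = 4 ^ n" by (simp add: power_mult)
    have D: "pochhammer (2 * \<gamma> + 1) (2 * n) = 4 ^ n * pochhammer (\<gamma> + 1/2) n * P"
      using pochhammer_double[of "\<gamma> + 1/2" n] unfolding e1 e2 e3 P_def .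
    have E: "pochhammer (2 * \<gamma> + 1) (2 * n) = pochhammer (2 * \<gamma> + 1) n * pochhammer (2 * \<gamma> + 1 + of_nat n) n"
      unfolding mult_2 by (rule pochhammer_product')
    have "pochhammer (2 * \<gamma> + 1) n * pochhammer (2 * \<gamma> + 1 + real n) n = 4 ^ n * pochhammer (\<gamma> + 1/2) n * P"
      using D E by simp
    then show ?thesis using Q0 by (simp add: field_simps)
  qed
  finally show ?thesis using P0 Q0 by (simp add: field_simps P_def)
qed

lemma summable_ratio_gen:
  fixes t \<rho> :: "nat \<Rightarrow> real"
  assumes rec: "\<And>n. t (Suc n) = t n * (\<rho> n * x / real (Suc n))" and K: "\<And>n. \<bar>\<rho> n\<bar> \<le> K"
  shows "summable (\<lambda>n. \<bar>t n\<bar>)"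
proof (rule summable_ratio_fact[where c = "K * \<bar>x\<bar>"])
  have "0 \<le> \<bar>\<rho> 0\<bar>" by simp
  also have "\<dots> \<le> K" by (rule K)
  finally show "0 \<le> K * \<bar>x\<bar>" by simp
  fix n
  have "\<bar>t (Suc n)\<bar> = \<bar>\<rho> n\<bar> * \<bar>x\<bar> / real (Suc n) * \<bar>t n\<bar>"
    unfolding rec by (simp add: abs_mult abs_divide)
  also have "\<dots> \<le> K * \<bar>x\<bar> / real (Suc n) * \<bar>t n\<bar>"
    by (intro mult_right_mono divide_right_mono mult_right_mono K) auto
  finally show "\<bar>t (Suc n)\<bar> \<le> K * \<bar>x\<bar> / real (Suc n) * \<bar>t n\<bar>" .
qed

definition bcoef :: "real \<Rightarrow> nat \<Rightarrow> real" where
  "bcoef \<gamma> n = pochhammer (\<gamma> + 1/2) n / (pochhammer (\<gamma> + 1) n * pochhammer (2 * \<gamma> + 1) n * fact n)"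

lemma bcoef_summable:
  fixes \<gamma> :: real
  assumes "\<gamma> > 0"
  shows "summable (\<lambda>n. \<bar>bcoef \<gamma> n * x ^ n\<bar>)"
proof (rule summable_ratio_gen[where \<rho> = "\<lambda>n. (\<gamma> + 1/2 + real n) / ((\<gamma> + 1 + real n) * (2 * \<gamma> + 1 + real n))" and x = x and K = 1])
  fix n
  have p1: "pochhammer (\<gamma> + 1) n > 0" "pochhammer (2 * \<gamma> + 1) n > 0" "pochhammer (\<gamma> + 1/2) n > 0"
    using assms by (auto intro!: pochhammer_pos)
  show "bcoef \<gamma> (Suc n) * x ^ Suc n = bcoef \<gamma> n * x ^ n *
     ((\<gamma> + 1/2 + real n) / ((\<gamma> + 1 + real n) * (2 * \<gamma> + 1 + real n)) * x / real (Suc n))"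
    unfolding bcoef_def pochhammer_rec' fact_Suc using p1 assms
    by (simp add: field_simps)
  have "(\<gamma> + 1/2 + real n) / ((\<gamma> + 1 + real n) * (2 * \<gamma> + 1 + real n)) \<le> 1"
  proof -
    have "\<gamma> + 1/2 + real n \<le> (\<gamma> + 1 + real n) * (2 * \<gamma> + 1 + real n)"
    proof -
      have "\<gamma> + 1/2 + real n \<le> (\<gamma> + 1 + real n) * 1" by simp
      also have "\<dots> \<le> (\<gamma> + 1 + real n) * (2 * \<gamma> + 1 + real n)"
        using assms by (intro mult_left_mono) auto
      finally show ?thesis .
    qed
    then show ?thesis using assms by (simp add: divide_le_eq_1)
  qed
  moreover have "(\<gamma> + 1/2 + real n) / ((\<gamma> + 1 + real n) * (2 * \<gamma> + 1 + real n)) \<ge> 0"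
    using assms by simp
  ultimately show "\<bar>(\<gamma> + 1/2 + real n) / ((\<gamma> + 1 + real n) * (2 * \<gamma> + 1 + real n))\<bar> \<le> 1"
    by (simp only: abs_of_nonneg)
qed

lemma besselJ_sq:
  fixes \<gamma> z :: real
  assumes g: "\<gamma> > 0" and z: "z > 0"
  shows "(besselJ \<gamma> z)\<^sup>2 = (z / 2) powr (2 * \<gamma>) * (rGamma (\<gamma> + 1))\<^sup>2 * (\<Sum>n. bcoef \<gamma> n * (- z\<^sup>2) ^ n)"
proof -
  define a where "a = (\<lambda>k. (- (z\<^sup>2 / 4)) ^ k / (pochhammer (\<gamma> + 1) k * fact k))"
  have J: "besselJ \<gamma> z = (z / 2) powr \<gamma> * rGamma (\<gamma> + 1) * suminf a"
    unfolding a_def by (rule besselJ_series) (use g z in auto)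
  have sa: "summable (\<lambda>k. norm (a k))"
    unfolding a_def real_norm_def by (rule bessel_summable) (use g in simp)
  have "suminf a * suminf a = (\<Sum>n. \<Sum>i\<le>n. a i * a (n - i))"
    by (rule Cauchy_product[OF sa sa])
  also have "\<dots> = (\<Sum>n. bcoef \<gamma> n * (- z\<^sup>2) ^ n)"
  proof (rule suminf_cong)
    fix n
    have "(\<Sum>i\<le>n. a i * a (n - i)) = (\<Sum>i\<le>n. (- (z\<^sup>2 / 4)) ^ n *
       (1 / (pochhammer (\<gamma> + 1) i * fact i * (pochhammer (\<gamma> + 1) (n - i) * fact (n - i)))))"
    proof (rule sum.cong[OF refl])
      fix i assume "i \<in> {..n}"
      then have "i + (n - i) = n" by simp
      then have "(- (z\<^sup>2 / 4)) ^ i * (- (z\<^sup>2 / 4)) ^ (n - i) = (- (z\<^sup>2 / 4)) ^ n"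
        by (simp flip: power_add)
      then show "a i * a (n - i) = (- (z\<^sup>2 / 4)) ^ n *
         (1 / (pochhammer (\<gamma> + 1) i * fact i * (pochhammer (\<gamma> + 1) (n - i) * fact (n - i))))"
        unfolding a_def by (simp add: field_simps)
    qed
    also have "\<dots> = (- (z\<^sup>2 / 4)) ^ n * (4 ^ n * pochhammer (\<gamma> + 1/2) n / (pochhammer (\<gamma> + 1) n * pochhammer (2 * \<gamma> + 1) n * fact n))"
      by (simp only: vandermonde_bessel[OF g] flip: sum_distrib_left)
    also have "\<dots> = ((- (z\<^sup>2 / 4)) ^ n * 4 ^ n) * bcoef \<gamma> n"
      unfolding bcoef_def by simp
    also have "(- (z\<^sup>2 / 4)) ^ n * 4 ^ n = (- z\<^sup>2) ^ n"
      by (simp flip: power_mult_distrib)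
    finally show "(\<Sum>i\<le>n. a i * a (n - i)) = bcoef \<gamma> n * (- z\<^sup>2) ^ n" by simp
  qed
  finally have S: "suminf a * suminf a = (\<Sum>n. bcoef \<gamma> n * (- z\<^sup>2) ^ n)" .
  have P: "(z / 2) powr \<gamma> * (z / 2) powr \<gamma> = (z / 2) powr (2 * \<gamma>)"
    by (simp flip: powr_add)
  have "(besselJ \<gamma> z)\<^sup>2 = ((z / 2) powr \<gamma> * (z / 2) powr \<gamma>) * (rGamma (\<gamma> + 1))\<^sup>2 * (suminf a * suminf a)"
    unfolding J by (simp add: power2_eq_square mult_ac)
  then show ?thesis unfolding S P .
qed






lemma beta_half:
  fixes \<alpha> :: real and m :: nat
  assumes a: "\<alpha> > 0"
  shows "(\<integral>\<^sup>+s. ennreal (indicator {0..1} s * (s ^ m * (1 - s\<^sup>2) powr (\<alpha> - 1))) \<partial>lborel)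
         = ennreal (Beta ((real m + 1) / 2) \<alpha> / 2)"
proof -
  define f where "f = (\<lambda>u::real. u powr ((real m + 1) / 2 - 1) * (1 - u) powr (\<alpha> - 1) / 2)"
  have hi: "(f has_integral (Beta ((real m + 1) / 2) \<alpha> / 2)) {0..1}"
    unfolding f_def using has_integral_Beta_real[of "(real m + 1) / 2" \<alpha>] a
    by (intro has_integral_divide) auto
  have B: "(\<integral>\<^sup>+x. ennreal (f x) * indicator {0..1} x \<partial>lborel) = ennreal (Beta ((real m + 1) / 2) \<alpha> / 2)"
    by (rule nn_integral_has_integral_lebesgue'[OF _ hi]) (auto simp: f_def)
  have "(\<integral>\<^sup>+x. ennreal (f x) * indicator {0..1} x \<partial>lborel)
      = (\<integral>\<^sup>+x. ennreal (f x * indicator {(\<lambda>s. s\<^sup>2) 0..(\<lambda>s. s\<^sup>2) 1} x) \<partial>lborel)"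
    by (intro nn_integral_cong) (auto split: split_indicator)
  also have "\<dots> = (\<integral>\<^sup>+x. ennreal (f ((\<lambda>s. s\<^sup>2) x) * (2 * x) * indicator {0..1} x) \<partial>lborel)"
  proof (rule nn_integral_substitution)
    show "set_borel_measurable borel {(\<lambda>s. s\<^sup>2) 0..(\<lambda>s. s\<^sup>2) (1::real)} f"
      unfolding set_borel_measurable_def f_def by measurable
    show "((\<lambda>s. s\<^sup>2) has_real_derivative 2 * x) (at x)" for x :: real
      by (auto intro!: derivative_eq_intros)
    show "continuous_on {0..1::real} (\<lambda>x. 2 * x)" by (intro continuous_intros)
  qed auto
  also have "\<dots> = (\<integral>\<^sup>+s. ennreal (indicator {0..1} s * (s ^ m * (1 - s\<^sup>2) powr (\<alpha> - 1))) \<partial>lborel)"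
  proof (rule nn_integral_cong_AE)
    show "AE x in lborel. ennreal (f ((\<lambda>s. s\<^sup>2) x) * (2 * x) * indicator {0..1} x) =
        ennreal (indicator {0..1} x * (x ^ m * (1 - x\<^sup>2) powr (\<alpha> - 1)))"
      using AE_lborel_singleton[of 0]
    proof eventually_elim
      case (elim x)
      show ?case
      proof (cases "x \<in> {0..1}")
        case True
        with elim have x: "x > 0" by auto
        have "(x\<^sup>2) powr ((real m + 1) / 2 - 1) = x powr (real m - 1)"
        proof -
          have "(x\<^sup>2) powr ((real m + 1) / 2 - 1) = (x powr 2) powr ((real m + 1) / 2 - 1)"
            using x by (simp add: powr_realpow)
          also have "\<dots> = x powr (2 * ((real m + 1) / 2 - 1))" by (simp add: powr_powr)
          also have "2 * ((real m + 1) / 2 - 1) = real m - 1" by (simp add: field_simps)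
          finally show ?thesis .
        qed
        moreover have "x powr (real m - 1) * x = x ^ m"
          using x by (simp add: powr_diff powr_realpow)
        ultimately show ?thesis using True unfolding f_def by (simp add: algebra_simps)
      qed auto
    qed
  qed
  finally show ?thesis using B by simp
qed
lemma Beta_pos: "a > 0 \<Longrightarrow> b > 0 \<Longrightarrow> Beta a b > (0::real)"
  using Gamma_real_pos[of a] Gamma_real_pos[of b] Gamma_real_pos[of "a + b"] by (simp add: Beta_def)

definition Wf :: "real \<Rightarrow> real \<Rightarrow> real \<Rightarrow> real \<Rightarrow> real \<Rightarrow> real" where
  "Wf \<mu> \<alpha> \<epsilon> y t = (if 0 \<le> y \<and> \<epsilon> * y \<le> t \<and> t \<le> 1 \<and> 0 \<le> t then (1 - t) powr \<mu> * t * (t\<^sup>2 - (\<epsilon> * y)\<^sup>2) powr (\<alpha> - 1) else 0)"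

lemma Wf_nonneg: "Wf \<mu> \<alpha> \<epsilon> y t \<ge> 0"
  unfolding Wf_def by auto

lemma Wf_measurable [measurable]: "(\<lambda>(y, t). Wf \<mu> \<alpha> \<epsilon> y t) \<in> borel_measurable (lborel \<Otimes>\<^sub>M lborel)"
  unfolding Wf_def case_prod_beta by measurable

lemma Wf_measurable2 [measurable]: "(\<lambda>y. Wf \<mu> \<alpha> \<epsilon> y t) \<in> borel_measurable borel"
  unfolding Wf_def by measurable

lemma inner_integral:
  fixes \<epsilon> \<alpha> \<mu> t :: real and m :: nat
  assumes e: "\<epsilon> > 0" and a: "\<alpha> > 0" and t: "0 < t" "t \<le> 1"
  shows "(\<integral>\<^sup>+y. ennreal (y ^ m * Wf \<mu> \<alpha> \<epsilon> y t) \<partial>lborel)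
       = ennreal ((t / \<epsilon>) * ((t / \<epsilon>) ^ m * (1 - t) powr \<mu> * t * t powr (2 * \<alpha> - 2)) * (Beta ((real m + 1) / 2) \<alpha> / 2))"
proof -
  define c where "c = t / \<epsilon>"
  have c: "c > 0" using e t by (simp add: c_def)
  define K where "K = c ^ m * (1 - t) powr \<mu> * t * t powr (2 * \<alpha> - 2)"
  have K: "K \<ge> 0" using c t unfolding K_def by simp
  have meas: "(\<lambda>y. ennreal (y ^ m * Wf \<mu> \<alpha> \<epsilon> y t)) \<in> borel_measurable borel"
    by measurable
  have "(\<integral>\<^sup>+y. ennreal (y ^ m * Wf \<mu> \<alpha> \<epsilon> y t) \<partial>lborel)
      = ennreal \<bar>c\<bar> * (\<integral>\<^sup>+s. ennreal ((0 + c * s) ^ m * Wf \<mu> \<alpha> \<epsilon> (0 + c * s) t) \<partial>lborel)"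
    by (rule nn_integral_real_affine[OF meas]) (use c in simp)
  also have "(\<integral>\<^sup>+s. ennreal ((0 + c * s) ^ m * Wf \<mu> \<alpha> \<epsilon> (0 + c * s) t) \<partial>lborel)
      = (\<integral>\<^sup>+s. ennreal (indicator {0..1} s * (s ^ m * (1 - s\<^sup>2) powr (\<alpha> - 1))) * ennreal K \<partial>lborel)"
  proof (rule nn_integral_cong)
    fix s :: real
    have ec: "\<epsilon> * c = t" using e by (simp add: c_def)
    show "ennreal ((0 + c * s) ^ m * Wf \<mu> \<alpha> \<epsilon> (0 + c * s) t) =
        ennreal (indicator {0..1} s * (s ^ m * (1 - s\<^sup>2) powr (\<alpha> - 1))) * ennreal K"
    proof (cases "0 \<le> s \<and> s \<le> 1")
      case True
      have cond: "0 \<le> c * s \<and> \<epsilon> * (c * s) \<le> t \<and> t \<le> 1 \<and> 0 \<le> t"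
      proof -
        have e1: "\<epsilon> * (c * s) = t * s" using ec by (simp add: mult.assoc[symmetric])
        have "t * s \<le> t" using True t by (intro mult_left_le) auto
        moreover have "0 \<le> c * s" using True c by simp
        ultimately show ?thesis unfolding e1 using t by simp
      qed
      have "(t\<^sup>2 - (\<epsilon> * (c * s))\<^sup>2) = t\<^sup>2 * (1 - s\<^sup>2)"
        unfolding mult.assoc[symmetric] ec by (simp add: algebra_simps power_mult_distrib)
      then have "(t\<^sup>2 - (\<epsilon> * (c * s))\<^sup>2) powr (\<alpha> - 1) = (t\<^sup>2) powr (\<alpha> - 1) * (1 - s\<^sup>2) powr (\<alpha> - 1)"
        using True by (simp add: powr_mult abs_square_le_1)
      also have "(t\<^sup>2) powr (\<alpha> - 1) = t powr (2 * \<alpha> - 2)"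
      proof -
        have "t\<^sup>2 = t powr 2" using t by simp
        then have "(t\<^sup>2) powr (\<alpha> - 1) = t powr (2 * (\<alpha> - 1))" by (simp add: powr_powr)
        then show ?thesis by (simp add: algebra_simps)
      qed
      finally have pw: "(t\<^sup>2 - (\<epsilon> * (c * s))\<^sup>2) powr (\<alpha> - 1) = t powr (2 * \<alpha> - 2) * (1 - s\<^sup>2) powr (\<alpha> - 1)" .
      have "(0 + c * s) ^ m * Wf \<mu> \<alpha> \<epsilon> (0 + c * s) t = (s ^ m * (1 - s\<^sup>2) powr (\<alpha> - 1)) * K"
      proof -
        have pm: "(0 + c * s) ^ m = c ^ m * s ^ m" by (simp add: power_mult_distrib)
        have "Wf \<mu> \<alpha> \<epsilon> (0 + c * s) t = (1 - t) powr \<mu> * t * (t powr (2 * \<alpha> - 2) * (1 - s\<^sup>2) powr (\<alpha> - 1))"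
          unfolding Wf_def using cond by (simp add: pw)
        then show ?thesis unfolding pm K_def by (simp add: mult_ac)
      qed
      then show ?thesis using True K c
        by (simp add: ennreal_mult'[symmetric] mult_nonneg_nonneg)
    next
      case False
      then have "\<not> (0 \<le> c * s \<and> \<epsilon> * (c * s) \<le> t)"
        using c ec t by (auto simp: mult.assoc[symmetric] zero_le_mult_iff)
      then show ?thesis using False unfolding Wf_def by auto
    qed
  qed
  also have "\<dots> = (\<integral>\<^sup>+s. ennreal (indicator {0..1} s * (s ^ m * (1 - s\<^sup>2) powr (\<alpha> - 1))) \<partial>lborel) * ennreal K"
    by (rule nn_integral_multc) measurable
  also have "\<dots> = ennreal (Beta ((real m + 1) / 2) \<alpha> / 2) * ennreal K"
    by (simp only: beta_half[OF a])
  finally have F: "(\<integral>\<^sup>+y. ennreal (y ^ m * Wf \<mu> \<alpha> \<epsilon> y t) \<partial>lborel) =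
      ennreal \<bar>c\<bar> * (ennreal (Beta ((real m + 1) / 2) \<alpha> / 2) * ennreal K)" .
  have B0: "Beta ((real m + 1) / 2) \<alpha> / 2 \<ge> 0"
    using Beta_pos[of "(real m + 1) / 2" \<alpha>] a by simp
  have "ennreal \<bar>c\<bar> * (ennreal (Beta ((real m + 1) / 2) \<alpha> / 2) * ennreal K)
      = ennreal (\<bar>c\<bar> * ((Beta ((real m + 1) / 2) \<alpha> / 2) * K))"
    using B0 K by (simp only: ennreal_mult abs_ge_zero mult_nonneg_nonneg)
  also have "\<bar>c\<bar> * ((Beta ((real m + 1) / 2) \<alpha> / 2) * K) =
     (t / \<epsilon>) * ((t / \<epsilon>) ^ m * (1 - t) powr \<mu> * t * t powr (2 * \<alpha> - 2)) * (Beta ((real m + 1) / 2) \<alpha> / 2)"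
    using c unfolding K_def c_def by (simp only: abs_of_pos mult_ac)
  finally show ?thesis using F by simp

qed

lemma Wf_zero: "\<not> (0 < t \<and> t \<le> 1) \<Longrightarrow> Wf \<mu> \<alpha> \<epsilon> y t = 0"
  unfolding Wf_def by auto

lemma inner_integral':
  fixes \<epsilon> \<alpha> \<mu> t :: real and m :: nat
  assumes e: "\<epsilon> > 0" and a: "\<alpha> > 0"
  shows "(\<integral>\<^sup>+y. ennreal (y ^ m * Wf \<mu> \<alpha> \<epsilon> y t) \<partial>lborel)
       = ennreal (t powr (real m + 2 * \<alpha>) * (1 - t) powr \<mu> * (Beta ((real m + 1) / 2) \<alpha> / 2 / \<epsilon> ^ (m + 1))) * indicator {0..1} t"
proof (cases "0 < t \<and> t \<le> 1")
  case True
  then have t: "0 < t" "t \<le> 1" by auto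
  have "(t / \<epsilon>) * ((t / \<epsilon>) ^ m * (1 - t) powr \<mu> * t * t powr (2 * \<alpha> - 2)) * (Beta ((real m + 1) / 2) \<alpha> / 2)
      = (t * t ^ m * t * t powr (2 * \<alpha> - 2)) * (1 - t) powr \<mu> * (Beta ((real m + 1) / 2) \<alpha> / 2 / \<epsilon> ^ (m + 1))"
    using e by (simp add: field_simps power_divide)
  also have "t * t ^ m * t * t powr (2 * \<alpha> - 2) = t powr (real m + 2 * \<alpha>)"
  proof -
    have "t * t ^ m * t * t powr (2 * \<alpha> - 2) = t powr 1 * t powr (real m) * t powr 1 * t powr (2 * \<alpha> - 2)"
      using t by (simp add: powr_realpow)
    also have "\<dots> = t powr (1 + real m + 1 + (2 * \<alpha> - 2))"
      by (simp only: powr_add)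
    also have "1 + real m + 1 + (2 * \<alpha> - 2) = real m + 2 * \<alpha>" by simp
    finally show ?thesis .
  qed
  finally show ?thesis using inner_integral[OF e a t, of m \<mu>] True by simp
next
  case False
  then have "Wf \<mu> \<alpha> \<epsilon> y t = 0" for y by (rule Wf_zero)
  moreover have "t = 0 \<or> t \<notin> {0..1}" using False by auto
  ultimately show ?thesis by auto
qed

lemma moment:
  fixes \<epsilon> \<alpha> \<mu> :: real and m :: nat
  assumes e: "\<epsilon> > 0" and a: "\<alpha> > 0" and mu: "\<mu> > -1"
  shows "(\<integral>\<^sup>+y. (\<integral>\<^sup>+t. ennreal (y ^ m * Wf \<mu> \<alpha> \<epsilon> y t) \<partial>lborel) \<partial>lborel)
       = ennreal (Beta (real m + 2 * \<alpha> + 1) (\<mu> + 1) * (Beta ((real m + 1) / 2) \<alpha> / 2 / \<epsilon> ^ (m + 1)))"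
proof -
  define C where "C = Beta ((real m + 1) / 2) \<alpha> / 2 / \<epsilon> ^ (m + 1)"
  have meas: "(\<lambda>(y, t). ennreal (y ^ m * Wf \<mu> \<alpha> \<epsilon> y t)) \<in> borel_measurable (lborel \<Otimes>\<^sub>M lborel)"
    unfolding case_prod_beta by measurable
  have "(\<integral>\<^sup>+y. (\<integral>\<^sup>+t. ennreal (y ^ m * Wf \<mu> \<alpha> \<epsilon> y t) \<partial>lborel) \<partial>lborel)
      = (\<integral>\<^sup>+t. (\<integral>\<^sup>+y. ennreal (y ^ m * Wf \<mu> \<alpha> \<epsilon> y t) \<partial>lborel) \<partial>lborel)"
    using lborel_pair.Fubini'[OF meas] by simp
  also have "\<dots> = (\<integral>\<^sup>+t. ennreal (t powr (real m + 2 * \<alpha>) * (1 - t) powr \<mu> * C) * indicator {0..1} t \<partial>lborel)"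
    unfolding C_def by (intro nn_integral_cong inner_integral'[OF e a])
  also have "\<dots> = ennreal (Beta (real m + 2 * \<alpha> + 1) (\<mu> + 1) * C)"
  proof (rule nn_integral_has_integral_lebesgue')
    show "0 \<le> t powr (real m + 2 * \<alpha>) * (1 - t) powr \<mu> * C" if "t \<in> {0..1}" for t
      using Beta_pos[of "(real m + 1) / 2" \<alpha>] a e unfolding C_def by simp
    have "((\<lambda>t. t powr (real m + 2 * \<alpha> + 1 - 1) * (1 - t) powr (\<mu> + 1 - 1)) has_integral
        Beta (real m + 2 * \<alpha> + 1) (\<mu> + 1)) {0..1}"
      by (rule has_integral_Beta_real) (use a mu in auto)
    then have "((\<lambda>t. t powr (real m + 2 * \<alpha>) * (1 - t) powr \<mu>) has_integral
        Beta (real m + 2 * \<alpha> + 1) (\<mu> + 1)) {0..1}" by simp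
    then show "((\<lambda>t. t powr (real m + 2 * \<alpha>) * (1 - t) powr \<mu> * C) has_integral
        Beta (real m + 2 * \<alpha> + 1) (\<mu> + 1) * C) {0..1}"
      by (rule has_integral_mult_left)
  qed
  finally show ?thesis unfolding C_def .
qed






lemma Gamma_dup_real:
  fixes x :: real
  assumes x: "x > 0"
  shows "Gamma x * Gamma (x + 1/2) = 2 powr (1 - 2 * x) * sqrt pi * Gamma (2 * x)"
proof -
  have n1: "complex_of_real x \<notin> \<int>\<^sub>\<le>\<^sub>0"
  proof -
    have "x \<notin> \<int>\<^sub>\<le>\<^sub>0" using x nonpos_Ints_nonpos by force
    then show ?thesis by (metis of_real_in_nonpos_Ints_iff)
  qed
  have n2: "complex_of_real x + 1/2 \<notin> \<int>\<^sub>\<le>\<^sub>0"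
  proof -
    have "complex_of_real x + 1/2 = complex_of_real (x + 1/2)" by simp
    moreover have "x + 1/2 \<notin> \<int>\<^sub>\<le>\<^sub>0" using x nonpos_Ints_nonpos by force
    ultimately show ?thesis by (metis of_real_in_nonpos_Ints_iff)
  qed
  have "Gamma (complex_of_real x) * Gamma (complex_of_real x + 1/2) =
      exp ((1 - 2 * complex_of_real x) * of_real (ln 2)) * of_real (sqrt pi) * Gamma (2 * complex_of_real x)"
    by (rule Gamma_legendre_duplication[OF n1 n2])
  moreover have "Gamma (complex_of_real x) * Gamma (complex_of_real x + 1/2) = complex_of_real (Gamma x * Gamma (x + 1/2))"
  proof -
    have "complex_of_real x + 1/2 = complex_of_real (x + 1/2)" by simp
    then show ?thesis by (simp only: Gamma_complex_of_real of_real_mult)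
  qed
  moreover have "exp ((1 - 2 * complex_of_real x) * of_real (ln 2)) = complex_of_real (2 powr (1 - 2 * x))"
  proof -
    have "(1 - 2 * complex_of_real x) * of_real (ln 2) = complex_of_real ((1 - 2 * x) * ln 2)" by simp
    then have "exp ((1 - 2 * complex_of_real x) * of_real (ln 2)) = complex_of_real (exp ((1 - 2 * x) * ln 2))"
      by (simp only: exp_of_real)
    then show ?thesis by (simp add: powr_def)
  qed
  moreover have "Gamma (2 * complex_of_real x) = complex_of_real (Gamma (2 * x))"
  proof -
    have "2 * complex_of_real x = complex_of_real (2 * x)" by simp
    then show ?thesis by (simp only: Gamma_complex_of_real)
  qed
  ultimately have "complex_of_real (Gamma x * Gamma (x + 1/2)) = complex_of_real (2 powr (1 - 2 * x) * sqrt pi * Gamma (2 * x))"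
    by simp
  then show ?thesis by (simp only: of_real_eq_iff)
qed

lemma Gamma_shift_real:
  fixes x :: real
  assumes "x > 0"
  shows "Gamma (x + of_nat k) = Gamma x * pochhammer x k"
proof -
  have "x \<notin> \<int>\<^sub>\<le>\<^sub>0" using assms nonpos_Ints_nonpos by force
  then have "pochhammer x k = Gamma (x + of_nat k) / Gamma x" by (rule pochhammer_Gamma)
  moreover have "Gamma x > 0" using assms by simp
  ultimately show ?thesis by simp
qed

lemma const_identity:
  fixes z D \<alpha> lam :: real
  assumes z: "z > 0" and D: "D \<ge> 1" and a: "\<alpha> > 0" and lam: "lam = (D + 1) / 2 + \<alpha>"
  shows "z powr (1 - D / 2) * (z / 2) powr (D / 2 - 1) / 2 powr (\<alpha> - 1) * Gamma (2 * lam - 1) / Gamma (lam - 1/2) / 2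
       = 2 powr lam * Gamma lam / sqrt (2 * pi)"
proof -
  have l0: "lam - 1/2 = D / 2 + \<alpha>" using lam by (simp add: field_simps)
  have l: "lam - 1/2 > 0" unfolding l0 using D a by linarith
  have dup: "Gamma (lam - 1/2) * Gamma lam = 2 powr (1 - 2 * (lam - 1/2)) * sqrt pi * Gamma (2 * (lam - 1/2))"
    using Gamma_dup_real[OF l] by simp
  have g: "Gamma (lam - 1/2) > 0" using l by simp
  have e1: "z powr (1 - D / 2) * (z / 2) powr (D / 2 - 1) = 2 powr (1 - D / 2)"
  proof -
    have m: "1 - D / 2 = - (D / 2 - 1)" by simp
    have A: "(z / 2) powr (D / 2 - 1) = z powr (D / 2 - 1) / 2 powr (D / 2 - 1)"
      using z by (simp add: powr_divide)
    have B: "z powr (1 - D / 2) = 1 / z powr (D / 2 - 1)" unfolding m by (rule powr_minus_divide)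
    have C: "(2::real) powr (1 - D / 2) = 1 / 2 powr (D / 2 - 1)" unfolding m by (rule powr_minus_divide)
    have P: "z powr (D / 2 - 1) > 0" using z by simp
    show ?thesis unfolding A B C using P by simp
  qed
  have e2: "Gamma (2 * lam - 1) / Gamma (lam - 1/2) = Gamma lam / (2 powr (2 - 2 * lam) * sqrt pi)"
  proof -
    have "2 * (lam - 1/2) = 2 * lam - 1" by simp
    then have "Gamma (lam - 1/2) * Gamma lam = 2 powr (2 - 2 * lam) * sqrt pi * Gamma (2 * lam - 1)"
      using dup by (simp add: algebra_simps)
    then show ?thesis using g by (simp add: field_simps)
  qed
  have e3: "sqrt (2 * pi) = 2 powr (1/2) * sqrt pi"
    by (simp add: real_sqrt_mult powr_half_sqrt)
  have "z powr (1 - D / 2) * (z / 2) powr (D / 2 - 1) / 2 powr (\<alpha> - 1) * Gamma (2 * lam - 1) / Gamma (lam - 1/2) / 2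
      = (z powr (1 - D / 2) * (z / 2) powr (D / 2 - 1)) / 2 powr (\<alpha> - 1) * (Gamma (2 * lam - 1) / Gamma (lam - 1/2)) / 2"
    by (simp only: times_divide_eq_right)
  also have "\<dots> = 2 powr (1 - D / 2) / 2 powr (\<alpha> - 1) / 2 powr (2 - 2 * lam) / 2 * (Gamma lam / sqrt pi)"
    unfolding e1 e2 by (simp add: field_simps)
  also have "2 powr (1 - D / 2) / 2 powr (\<alpha> - 1) / 2 powr (2 - 2 * lam) / 2 = 2 powr ((1 - D / 2) - (\<alpha> - 1) - (2 - 2 * lam) - 1)"
    by (simp add: powr_diff)
  also have "(1 - D / 2) - (\<alpha> - 1) - (2 - 2 * lam) - 1 = lam - 1/2" using lam by (simp add: field_simps)
  also have "2 powr lam * Gamma lam / sqrt (2 * pi) = 2 powr (lam - 1/2) * (Gamma lam / sqrt pi)"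
  proof -
    have h: "(2::real) powr lam = 2 powr (1/2) * 2 powr (lam - 1/2)" by (simp flip: powr_add)
    show ?thesis unfolding e3 h by (simp add: field_simps)
  qed
  ultimately show ?thesis by simp
qed



lemma AE_negligible:
  assumes "AE x in lborel. P x"
  obtains S where "negligible S" "\<And>x. \<not> P x \<Longrightarrow> x \<in> S"
proof -
  from assms obtain N where N: "{x \<in> space lborel. \<not> P x} \<subseteq> N" "emeasure lborel N = 0" "N \<in> sets lborel"
    by (rule AE_E)
  then have "N \<in> null_sets lborel" by auto
  then have "N \<in> null_sets lebesgue" by (rule null_sets_completionI)
  then have "negligible N" by (simp add: negligible_iff_null_sets)
  moreover have "\<And>x. \<not> P x \<Longrightarrow> x \<in> N" using N(1) by auto
  ultimately show ?thesis using that by blast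
qed

definition NW :: "real \<Rightarrow> real \<Rightarrow> real \<Rightarrow> real \<Rightarrow> ennreal" where
  "NW \<mu> \<alpha> \<epsilon> y = (\<integral>\<^sup>+t. ennreal (Wf \<mu> \<alpha> \<epsilon> y t) \<partial>lborel)"

lemma NW_measurable [measurable]: "NW \<mu> \<alpha> \<epsilon> \<in> borel_measurable lborel"
proof -
  have "(\<lambda>(y, t). ennreal (Wf \<mu> \<alpha> \<epsilon> y t)) \<in> borel_measurable (lborel \<Otimes>\<^sub>M lborel)"
    unfolding case_prod_beta by measurable
  then have "(\<lambda>y. \<integral>\<^sup>+t. ennreal (Wf \<mu> \<alpha> \<epsilon> y t) \<partial>lborel) \<in> borel_measurable lborel"
    by (rule lborel.borel_measurable_nn_integral)
  then show ?thesis unfolding NW_def[abs_def] .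
qed

lemma NW_zero:
  assumes e: "\<epsilon> > 0" and y: "y < 0 \<or> y > 1 / \<epsilon>"
  shows "NW \<mu> \<alpha> \<epsilon> y = 0"
proof -
  have "Wf \<mu> \<alpha> \<epsilon> y t = 0" for t
  proof -
    have "\<not> (0 \<le> y \<and> \<epsilon> * y \<le> t \<and> t \<le> 1)"
    proof
      assume h: "0 \<le> y \<and> \<epsilon> * y \<le> t \<and> t \<le> 1"
      with y have "y > 1 / \<epsilon>" by auto
      then have "\<epsilon> * y > 1" using e by (simp add: field_simps)
      with h show False by auto
    qed
    then show ?thesis unfolding Wf_def by auto
  qed
  then show ?thesis unfolding NW_def by simp
qed

lemma NW_finite_AE:
  assumes e: "\<epsilon> > 0" and a: "\<alpha> > 0" and mu: "\<mu> > -1"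
  shows "AE y in lborel. NW \<mu> \<alpha> \<epsilon> y \<noteq> \<infinity>"
proof -
  have "(\<integral>\<^sup>+y. NW \<mu> \<alpha> \<epsilon> y \<partial>lborel) \<noteq> \<infinity>"
    using moment[OF e a mu, of 0] unfolding NW_def by simp
  then show ?thesis by (intro nn_integral_PInf_AE) measurable
qed

lemma wendland_NW:
  assumes e: "\<epsilon> > 0" and y: "0 \<le> y" "y \<le> 1 / \<epsilon>" and fin: "NW \<mu> \<alpha> \<epsilon> y \<noteq> \<infinity>"
  shows "wendland \<mu> \<alpha> \<epsilon> y = 1 / (2 powr (\<alpha> - 1) * Gamma \<alpha>) * enn2real (NW \<mu> \<alpha> \<epsilon> y)"
proof -
  define h where "h = (\<lambda>t. (1 - t) powr \<mu> * t * (t\<^sup>2 - (\<epsilon> * y)\<^sup>2) powr (\<alpha> - 1))"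
  have W: "Wf \<mu> \<alpha> \<epsilon> y t = (if t \<in> {\<epsilon> * y..1} then h t else 0)" for t
  proof -
    have "\<epsilon> * y \<ge> 0" using e y by simp
    then show ?thesis unfolding Wf_def h_def using y by auto
  qed
  have "((\<lambda>t. Wf \<mu> \<alpha> \<epsilon> y t) has_integral enn2real (NW \<mu> \<alpha> \<epsilon> y)) UNIV"
  proof (rule nn_integral_has_integral)
    show "(\<lambda>t. Wf \<mu> \<alpha> \<epsilon> y t) \<in> borel_measurable borel" unfolding Wf_def by measurable
    show "0 \<le> Wf \<mu> \<alpha> \<epsilon> y t" for t by (rule Wf_nonneg)
    show "(\<integral>\<^sup>+ t. ennreal (Wf \<mu> \<alpha> \<epsilon> y t) \<partial>lborel) = ennreal (enn2real (NW \<mu> \<alpha> \<epsilon> y))"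
      using fin unfolding NW_def by (simp add: ennreal_enn2real_if)
    show "0 \<le> enn2real (NW \<mu> \<alpha> \<epsilon> y)" by simp
  qed
  then have "(h has_integral enn2real (NW \<mu> \<alpha> \<epsilon> y)) {\<epsilon> * y..1}"
    unfolding W has_integral_restrict_UNIV .
  then have "integral {\<epsilon> * y..1} h = enn2real (NW \<mu> \<alpha> \<epsilon> y)" by (rule integral_unique)
  then show ?thesis unfolding wendland_def h_def using y by simp
qed

definition Gm :: "real \<Rightarrow> real \<Rightarrow> real \<Rightarrow> nat \<Rightarrow> real \<Rightarrow> real" where
  "Gm \<mu> \<alpha> \<epsilon> m y = enn2real (NW \<mu> \<alpha> \<epsilon> y) * y ^ m"

definition Mval :: "real \<Rightarrow> real \<Rightarrow> real \<Rightarrow> nat \<Rightarrow> real" where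
  "Mval \<mu> \<alpha> \<epsilon> m = Beta (real m + 2 * \<alpha> + 1) (\<mu> + 1) * (Beta ((real m + 1) / 2) \<alpha> / 2 / \<epsilon> ^ (m + 1))"

lemma Gm_measurable [measurable]: "Gm \<mu> \<alpha> \<epsilon> m \<in> borel_measurable lborel"
  unfolding Gm_def[abs_def] by measurable

lemma Gm_nonneg:
  assumes e: "\<epsilon> > 0"
  shows "Gm \<mu> \<alpha> \<epsilon> m y \<ge> 0"
proof (cases "y < 0")
  case True
  then show ?thesis using NW_zero[OF e] unfolding Gm_def by simp
qed (simp add: Gm_def)

lemma Mval_pos:
  assumes e: "\<epsilon> > 0" and a: "\<alpha> > 0" and mu: "\<mu> > -1"
  shows "Mval \<mu> \<alpha> \<epsilon> m > 0"
  unfolding Mval_def using Beta_pos[of "real m + 2 * \<alpha> + 1" "\<mu> + 1"] Beta_pos[of "(real m + 1) / 2" \<alpha>] e a mu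
  by simp

lemma Gm_integral:
  assumes e: "\<epsilon> > 0" and a: "\<alpha> > 0" and mu: "\<mu> > -1"
  shows "integrable lborel (Gm \<mu> \<alpha> \<epsilon> m)" "integral\<^sup>L lborel (Gm \<mu> \<alpha> \<epsilon> m) = Mval \<mu> \<alpha> \<epsilon> m"
proof -
  have "(\<integral>\<^sup>+y. ennreal (Gm \<mu> \<alpha> \<epsilon> m y) \<partial>lborel) = (\<integral>\<^sup>+y. (\<integral>\<^sup>+t. ennreal (y ^ m * Wf \<mu> \<alpha> \<epsilon> y t) \<partial>lborel) \<partial>lborel)"
  proof (rule nn_integral_cong_AE)
    show "AE y in lborel. ennreal (Gm \<mu> \<alpha> \<epsilon> m y) = (\<integral>\<^sup>+t. ennreal (y ^ m * Wf \<mu> \<alpha> \<epsilon> y t) \<partial>lborel)"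
      using NW_finite_AE[OF e a mu]
    proof eventually_elim
      case (elim y)
      show ?case
      proof (cases "y < 0")
        case True
        then have "Wf \<mu> \<alpha> \<epsilon> y t = 0" for t unfolding Wf_def by auto
        then show ?thesis using True NW_zero[OF e, of y] unfolding Gm_def by simp
      next
        case False
        then have "(\<integral>\<^sup>+t. ennreal (y ^ m * Wf \<mu> \<alpha> \<epsilon> y t) \<partial>lborel) = (\<integral>\<^sup>+t. ennreal (y ^ m) * ennreal (Wf \<mu> \<alpha> \<epsilon> y t) \<partial>lborel)"
          by (intro nn_integral_cong) (simp add: ennreal_mult Wf_nonneg)
        also have "\<dots> = ennreal (y ^ m) * NW \<mu> \<alpha> \<epsilon> y"
          unfolding NW_def by (rule nn_integral_cmult) measurable
        also have "\<dots> = ennreal (y ^ m) * ennreal (enn2real (NW \<mu> \<alpha> \<epsilon> y))"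
          using elim by (simp add: ennreal_enn2real_if)
        also have "\<dots> = ennreal (Gm \<mu> \<alpha> \<epsilon> m y)"
          unfolding Gm_def using False by (simp add: ennreal_mult mult.commute)
        finally show ?thesis ..
      qed
    qed
  qed
  also have "\<dots> = ennreal (Mval \<mu> \<alpha> \<epsilon> m)" unfolding Mval_def by (rule moment[OF e a mu])
  finally have I: "(\<integral>\<^sup>+y. ennreal (Gm \<mu> \<alpha> \<epsilon> m y) \<partial>lborel) = ennreal (Mval \<mu> \<alpha> \<epsilon> m)" .
  have "integrable lborel (Gm \<mu> \<alpha> \<epsilon> m) \<and> integral\<^sup>L lborel (Gm \<mu> \<alpha> \<epsilon> m) = Mval \<mu> \<alpha> \<epsilon> m"
    using I Gm_nonneg[OF e] Mval_pos[OF e a mu, of m]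
    by (subst nn_integral_eq_integrable[symmetric]) auto
  then show "integrable lborel (Gm \<mu> \<alpha> \<epsilon> m)" "integral\<^sup>L lborel (Gm \<mu> \<alpha> \<epsilon> m) = Mval \<mu> \<alpha> \<epsilon> m"
    by auto
qed






definition acoef :: "real \<Rightarrow> real \<Rightarrow> nat \<Rightarrow> real" where
  "acoef lam \<mu> k = pochhammer lam k / (pochhammer (lam + \<mu> / 2) k * pochhammer (lam + (\<mu> + 1) / 2) k * fact k)"

lemma Mval_gamma:
  fixes d k :: nat and \<epsilon> \<mu> \<alpha> :: real
  assumes d: "d \<ge> 1" and e: "\<epsilon> > 0" and mu: "\<mu> > -1" and a: "\<alpha> > 0"
  defines "lam \<equiv> (real d + 1) / 2 + \<alpha>"
  shows "Mval \<mu> \<alpha> \<epsilon> (d - 1 + 2 * k) =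
    Gamma (2 * lam - 1) * pochhammer (lam - 1/2) k * pochhammer lam k * Gamma (\<mu> + 1)
      / (Gamma (2 * lam + \<mu>) * pochhammer (lam + \<mu> / 2) k * pochhammer (lam + (\<mu> + 1) / 2) k)
    * (Gamma (real d / 2) * pochhammer (real d / 2) k * Gamma \<alpha> / (Gamma (lam - 1/2) * pochhammer (lam - 1/2) k))
    / 2 / (\<epsilon> ^ d * (\<epsilon>\<^sup>2) ^ k)"
proof -
  have rm: "real (d - 1 + 2 * k) = real d - 1 + 2 * real k" using d by (simp add: of_nat_diff)
  have rd: "real d \<ge> 1" using d by simp
  have l1: "2 * lam - 1 > 0" "lam - 1/2 > 0" "2 * lam + \<mu> > 0" using rd a mu unfolding lam_def by (simp_all add: field_simps)
  have d2: "real d / 2 > 0" using d by simp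
  have A1: "real (d - 1 + 2 * k) + 2 * \<alpha> + 1 = (2 * lam - 1) + of_nat (2 * k)" unfolding rm lam_def by (simp add: field_simps)
  have A2: "real (d - 1 + 2 * k) + 2 * \<alpha> + 1 + (\<mu> + 1) = (2 * lam + \<mu>) + of_nat (2 * k)" unfolding rm lam_def by (simp add: field_simps)
  have A3: "(real (d - 1 + 2 * k) + 1) / 2 = real d / 2 + of_nat k" unfolding rm by (simp add: field_simps)
  have A4: "(real (d - 1 + 2 * k) + 1) / 2 + \<alpha> = (lam - 1/2) + of_nat k" unfolding rm lam_def by (simp add: field_simps)
  have A5: "d - 1 + 2 * k + 1 = d + 2 * k" using d by simp
  have P1: "pochhammer (2 * lam - 1) (2 * k) = 4 ^ k * pochhammer (lam - 1/2) k * pochhammer lam k"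
  proof -
    have "pochhammer (2 * (lam - 1/2)) (2 * k) = of_nat (2 ^ (2 * k)) * pochhammer (lam - 1/2) k * pochhammer (lam - 1/2 + 1/2) k"
      by (rule pochhammer_double)
    moreover have "2 * (lam - 1/2) = 2 * lam - 1" "lam - 1/2 + 1/2 = lam" by simp_all
    moreover have "(of_nat (2 ^ (2 * k)) :: real) = 4 ^ k" by (simp add: power_mult)
    ultimately show ?thesis by simp
  qed
  have P2: "pochhammer (2 * lam + \<mu>) (2 * k) = 4 ^ k * pochhammer (lam + \<mu> / 2) k * pochhammer (lam + (\<mu> + 1) / 2) k"
  proof -
    have "pochhammer (2 * (lam + \<mu> / 2)) (2 * k) = of_nat (2 ^ (2 * k)) * pochhammer (lam + \<mu> / 2) k * pochhammer (lam + \<mu> / 2 + 1/2) k"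
      by (rule pochhammer_double)
    moreover have "2 * (lam + \<mu> / 2) = 2 * lam + \<mu>" "lam + \<mu> / 2 + 1/2 = lam + (\<mu> + 1) / 2" by (simp_all add: field_simps)
    moreover have "(of_nat (2 ^ (2 * k)) :: real) = 4 ^ k" by (simp add: power_mult)
    ultimately show ?thesis by simp
  qed
  have B1: "Beta (real (d - 1 + 2 * k) + 2 * \<alpha> + 1) (\<mu> + 1) =
      Gamma (2 * lam - 1) * (4 ^ k * pochhammer (lam - 1/2) k * pochhammer lam k) * Gamma (\<mu> + 1)
      / (Gamma (2 * lam + \<mu>) * (4 ^ k * pochhammer (lam + \<mu> / 2) k * pochhammer (lam + (\<mu> + 1) / 2) k))"
    unfolding Beta_def A2 unfolding A1 Gamma_shift_real[OF l1(1)] Gamma_shift_real[OF l1(3)] P1 P2 ..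
  have B2: "Beta ((real (d - 1 + 2 * k) + 1) / 2) \<alpha> =
      Gamma (real d / 2) * pochhammer (real d / 2) k * Gamma \<alpha> / (Gamma (lam - 1/2) * pochhammer (lam - 1/2) k)"
    unfolding Beta_def A4 unfolding A3 Gamma_shift_real[OF d2] Gamma_shift_real[OF l1(2)] ..
  have E: "\<epsilon> ^ (d - 1 + 2 * k + 1) = \<epsilon> ^ d * (\<epsilon>\<^sup>2) ^ k"
    unfolding A5 by (simp add: power_add power_mult)
  have f4: "(4::real) ^ k \<noteq> 0" by simp
  show ?thesis unfolding Mval_def B1 B2 E using f4 by (simp add: field_simps)
qed

lemma coef_identity:
  fixes d k :: nat and \<epsilon> \<mu> \<alpha> z :: real
  assumes d: "d \<ge> 1" and e: "\<epsilon> > 0" and mu: "\<mu> > -1" and a: "\<alpha> > 0" and z: "z > 0"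
  defines "lam \<equiv> (real d + 1) / 2 + \<alpha>"
  shows "z powr (1 - real d / 2) * (1 / (2 powr (\<alpha> - 1) * Gamma \<alpha>) * (z / 2) powr (real d / 2 - 1) * rGamma (real d / 2)
           * ((- (z\<^sup>2 / 4)) ^ k / (pochhammer (real d / 2) k * fact k))) * Mval \<mu> \<alpha> \<epsilon> (d - 1 + 2 * k)
       = (2 powr lam * Gamma lam * Gamma (\<mu> + 1) / Gamma (2 * lam + \<mu>)) / (sqrt (2 * pi) * \<epsilon> ^ d)
           * (acoef lam \<mu> k * (- (1 / (4 * \<epsilon>\<^sup>2))) ^ k * (z\<^sup>2) ^ k)"
proof -
  have rd: "real d \<ge> 1" using d by simp
  have l1: "lam - 1/2 > 0" "2 * lam + \<mu> > 0" "lam > 0" "lam + \<mu> / 2 > 0" "lam + (\<mu> + 1) / 2 > 0"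
    using rd a mu unfolding lam_def by (simp_all add: field_simps)
  have CI: "z powr (1 - real d / 2) * (z / 2) powr (real d / 2 - 1) / 2 powr (\<alpha> - 1) * Gamma (2 * lam - 1) / Gamma (lam - 1/2) / 2
       = 2 powr lam * Gamma lam / sqrt (2 * pi)"
    by (rule const_identity[OF z rd a]) (simp add: lam_def)
  have pos: "Gamma (real d / 2) > 0" "Gamma \<alpha> > 0" "Gamma (lam - 1/2) > 0" "Gamma (2 * lam + \<mu>) > 0"
    "pochhammer (lam - 1/2) k > 0" "pochhammer (real d / 2) k > 0"
    "pochhammer (lam + \<mu> / 2) k > 0" "pochhammer (lam + (\<mu> + 1) / 2) k > 0"
    using l1 a rd by (auto intro!: pochhammer_pos)
  have rg: "rGamma (real d / 2) = 1 / Gamma (real d / 2)" by (simp add: rGamma_inverse_Gamma field_simps)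
  have zz: "(- (z\<^sup>2 / 4)) ^ k = (- (1 / (4 * \<epsilon>\<^sup>2))) ^ k * (z\<^sup>2) ^ k * (\<epsilon>\<^sup>2) ^ k"
  proof -
    have h: "- (z\<^sup>2 / 4) = (- (1 / (4 * \<epsilon>\<^sup>2))) * z\<^sup>2 * \<epsilon>\<^sup>2" using e by (simp add: field_simps)
    show ?thesis by (subst h) (simp only: power_mult_distrib)
  qed
  define X where "X = z powr (1 - real d / 2) * (z / 2) powr (real d / 2 - 1) / 2 powr (\<alpha> - 1) * Gamma (2 * lam - 1) / Gamma (lam - 1/2) / 2"
  have "z powr (1 - real d / 2) * (1 / (2 powr (\<alpha> - 1) * Gamma \<alpha>) * (z / 2) powr (real d / 2 - 1) * rGamma (real d / 2)
           * ((- (z\<^sup>2 / 4)) ^ k / (pochhammer (real d / 2) k * fact k))) * Mval \<mu> \<alpha> \<epsilon> (d - 1 + 2 * k)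
      = X * ((- (1 / (4 * \<epsilon>\<^sup>2))) ^ k * (z\<^sup>2) ^ k) * pochhammer lam k * Gamma (\<mu> + 1)
          / (Gamma (2 * lam + \<mu>) * pochhammer (lam + \<mu> / 2) k * pochhammer (lam + (\<mu> + 1) / 2) k * fact k * \<epsilon> ^ d)"
    unfolding Mval_gamma[OF d e mu a] rg zz X_def lam_def[symmetric] using pos e
    by (simp add: field_simps)
  also have "\<dots> = (2 powr lam * Gamma lam * Gamma (\<mu> + 1) / Gamma (2 * lam + \<mu>)) / (sqrt (2 * pi) * \<epsilon> ^ d)
           * (acoef lam \<mu> k * (- (1 / (4 * \<epsilon>\<^sup>2))) ^ k * (z\<^sup>2) ^ k)"
    unfolding X_def CI acoef_def using pos e by (simp add: field_simps)
  finally show ?thesis .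
qed

lemma acoef_summable:
  fixes lam \<mu> x :: real
  assumes l: "lam > 1/2" and mu: "\<mu> > -1"
  shows "summable (\<lambda>k. \<bar>acoef lam \<mu> k * x ^ k\<bar>)"
proof (rule summable_ratio_gen[where \<rho> = "\<lambda>k. (lam + real k) / ((lam + \<mu> / 2 + real k) * (lam + (\<mu> + 1) / 2 + real k))"
      and x = x and K = "1 / (lam + \<mu> / 2)"])
  fix n
  have l1: "lam + \<mu> / 2 > 0" "lam + (\<mu> + 1) / 2 > 0" "lam > 0" using l mu by (simp_all add: field_simps)
  have p1: "pochhammer lam n > 0" "pochhammer (lam + \<mu> / 2) n > 0" "pochhammer (lam + (\<mu> + 1) / 2) n > 0"
    using l1 by (auto intro!: pochhammer_pos)
  show "acoef lam \<mu> (Suc n) * x ^ Suc n = acoef lam \<mu> n * x ^ n *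
     ((lam + real n) / ((lam + \<mu> / 2 + real n) * (lam + (\<mu> + 1) / 2 + real n)) * x / real (Suc n))"
    unfolding acoef_def pochhammer_rec' fact_Suc using p1 l1
    by (simp add: field_simps)
  have q1: "(lam + real n) / (lam + (\<mu> + 1) / 2 + real n) \<le> 1" using l1 mu by (simp add: field_simps)
  have q2: "1 / (lam + \<mu> / 2 + real n) \<le> 1 / (lam + \<mu> / 2)" using l1 by (simp add: field_simps)
  have q0: "(lam + real n) / (lam + (\<mu> + 1) / 2 + real n) \<ge> 0" "1 / (lam + \<mu> / 2 + real n) \<ge> 0"
    using l1 by simp_all
  have "(lam + real n) / ((lam + \<mu> / 2 + real n) * (lam + (\<mu> + 1) / 2 + real n))
      = (1 / (lam + \<mu> / 2 + real n)) * ((lam + real n) / (lam + (\<mu> + 1) / 2 + real n))" by simp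
  also have "\<dots> \<le> (1 / (lam + \<mu> / 2)) * 1"
    using q0 q1 q2 l1 by (intro mult_mono) auto
  finally have "(lam + real n) / ((lam + \<mu> / 2 + real n) * (lam + (\<mu> + 1) / 2 + real n)) \<le> 1 / (lam + \<mu> / 2)" by simp
  moreover have "(lam + real n) / ((lam + \<mu> / 2 + real n) * (lam + (\<mu> + 1) / 2 + real n)) \<ge> 0" using l1 by simp
  ultimately show "\<bar>(lam + real n) / ((lam + \<mu> / 2 + real n) * (lam + (\<mu> + 1) / 2 + real n))\<bar> \<le> 1 / (lam + \<mu> / 2)"
    by (simp only: abs_of_nonneg)
qed

lemma FT_pointwise:
  fixes d :: nat and \<epsilon> \<mu> \<alpha> z y :: real
  assumes d: "d \<ge> 1" and e: "\<epsilon> > 0" and z: "z > 0" and y: "y > 0" and fin: "NW \<mu> \<alpha> \<epsilon> y \<noteq> \<infinity>"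
  defines "ck \<equiv> \<lambda>k. 1 / (2 powr (\<alpha> - 1) * Gamma \<alpha>) * (z / 2) powr (real d / 2 - 1) * rGamma (real d / 2)
           * ((- (z\<^sup>2 / 4)) ^ k / (pochhammer (real d / 2) k * fact k))"
  shows "wendland \<mu> \<alpha> \<epsilon> y * y powr (real d / 2) * besselJ (real d / 2 - 1) (y * z)
       = (\<Sum>k. ck k * Gm \<mu> \<alpha> \<epsilon> (d - 1 + 2 * k) y)"
proof (cases "y \<le> 1 / \<epsilon>")
  case False
  then have "NW \<mu> \<alpha> \<epsilon> y = 0" using NW_zero[OF e] by auto
  then have "Gm \<mu> \<alpha> \<epsilon> m y = 0" for m unfolding Gm_def by simp
  moreover have "wendland \<mu> \<alpha> \<epsilon> y = 0" using False unfolding wendland_def by simp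
  ultimately show ?thesis by simp
next
  case True
  define Kw where "Kw = 1 / (2 powr (\<alpha> - 1) * Gamma \<alpha>)"
  define ph where "ph = enn2real (NW \<mu> \<alpha> \<epsilon> y)"
  have W: "wendland \<mu> \<alpha> \<epsilon> y = Kw * ph"
    unfolding Kw_def ph_def by (rule wendland_NW[OF e _ True fin]) (use y in simp)
  have nu: "real d / 2 - 1 > -1" using d by simp
  have nu1: "real d / 2 - 1 + 1 = real d / 2" by simp
  have J: "besselJ (real d / 2 - 1) (y * z) = (y * z / 2) powr (real d / 2 - 1) * rGamma (real d / 2) *
      (\<Sum>k. (- ((y * z)\<^sup>2 / 4)) ^ k / (pochhammer (real d / 2) k * fact k))"
    using besselJ_series[OF nu, of "y * z"] y z unfolding nu1 by simp
  have s: "summable (\<lambda>k. (- ((y * z)\<^sup>2 / 4)) ^ k / (pochhammer (real d / 2) k * fact k))"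
    using summable_rabs_cancel[OF bessel_summable[OF nu, of "(y * z)\<^sup>2 / 4"]] unfolding nu1 .
  have pw: "y powr (real d / 2) * (y * z / 2) powr (real d / 2 - 1) = y ^ (d - 1) * (z / 2) powr (real d / 2 - 1)"
  proof -
    have "(y * z / 2) powr (real d / 2 - 1) = y powr (real d / 2 - 1) * (z / 2) powr (real d / 2 - 1)"
      using y z by (simp add: powr_mult[symmetric])
    moreover have "y powr (real d / 2) * y powr (real d / 2 - 1) = y powr (real (d - 1))"
      using d by (simp add: powr_add[symmetric] of_nat_diff)
    moreover have "y powr (real (d - 1)) = y ^ (d - 1)" using y by (rule powr_realpow)
    ultimately show ?thesis by (simp add: mult.assoc[symmetric])
  qed
  define Q where "Q = Kw * ph * y ^ (d - 1) * (z / 2) powr (real d / 2 - 1) * rGamma (real d / 2)"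
  have "wendland \<mu> \<alpha> \<epsilon> y * y powr (real d / 2) * besselJ (real d / 2 - 1) (y * z)
      = Q * (\<Sum>k. (- ((y * z)\<^sup>2 / 4)) ^ k / (pochhammer (real d / 2) k * fact k))"
    unfolding W J Q_def using pw by (simp add: mult_ac)
  also have "\<dots> = (\<Sum>k. Q * ((- ((y * z)\<^sup>2 / 4)) ^ k / (pochhammer (real d / 2) k * fact k)))"
    by (rule suminf_mult[OF s, symmetric])
  also have "\<dots> = (\<Sum>k. ck k * Gm \<mu> \<alpha> \<epsilon> (d - 1 + 2 * k) y)"
  proof (rule suminf_cong)
    fix k
    have "(- ((y * z)\<^sup>2 / 4)) ^ k = (- (z\<^sup>2 / 4)) ^ k * y ^ (2 * k)"
    proof -
      have h: "- ((y * z)\<^sup>2 / 4) = (- (z\<^sup>2 / 4)) * y\<^sup>2" by (simp add: power_mult_distrib)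
      have "y ^ (2 * k) = (y\<^sup>2) ^ k" by (simp add: power_mult)
      then show ?thesis by (subst h) (simp only: power_mult_distrib)
    qed
    moreover have "Gm \<mu> \<alpha> \<epsilon> (d - 1 + 2 * k) y = ph * y ^ (d - 1) * y ^ (2 * k)"
      unfolding Gm_def ph_def by (simp add: power_add)
    ultimately show "Q * ((- ((y * z)\<^sup>2 / 4)) ^ k / (pochhammer (real d / 2) k * fact k)) = ck k * Gm \<mu> \<alpha> \<epsilon> (d - 1 + 2 * k) y"
      unfolding Q_def ck_def Kw_def by (simp add: field_simps)
  qed
  finally show ?thesis .
qed

lemma FT_series:
  fixes d :: nat and \<epsilon> \<mu> \<alpha> z :: real
  assumes d: "d \<ge> 1" and e: "\<epsilon> > 0" and mu: "\<mu> > -1" and a: "\<alpha> > 0" and z: "z > 0"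
  defines "lam \<equiv> (real d + 1) / 2 + \<alpha>"
  defines "Ch \<equiv> (2 powr lam * Gamma lam * Gamma (\<mu> + 1) / Gamma (2 * lam + \<mu>)) / (sqrt (2 * pi) * \<epsilon> ^ d)"
  shows "radial_FT d (wendland \<mu> \<alpha> \<epsilon>) z = Ch * (\<Sum>k. acoef lam \<mu> k * (- (1 / (4 * \<epsilon>\<^sup>2))) ^ k * (z\<^sup>2) ^ k)"
proof -
  define ck where "ck = (\<lambda>k. 1 / (2 powr (\<alpha> - 1) * Gamma \<alpha>) * (z / 2) powr (real d / 2 - 1) * rGamma (real d / 2)
           * ((- (z\<^sup>2 / 4)) ^ k / (pochhammer (real d / 2) k * fact k)))"
  define f where "f = (\<lambda>k y. ck k * Gm \<mu> \<alpha> \<epsilon> (d - 1 + 2 * k) y)"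
  define T where "T = (\<lambda>k. acoef lam \<mu> k * (- (1 / (4 * \<epsilon>\<^sup>2))) ^ k * (z\<^sup>2) ^ k)"
  have l: "lam > 1/2" using a d unfolding lam_def by (simp add: field_simps)
  have sT: "summable (\<lambda>k. \<bar>T k\<bar>)"
  proof -
    have "summable (\<lambda>k. \<bar>acoef lam \<mu> k * ((- (1 / (4 * \<epsilon>\<^sup>2))) * z\<^sup>2) ^ k\<bar>)"
      by (rule acoef_summable[OF l mu])
    moreover have "(\<lambda>k. \<bar>acoef lam \<mu> k * ((- (1 / (4 * \<epsilon>\<^sup>2))) * z\<^sup>2) ^ k\<bar>) = (\<lambda>k. \<bar>T k\<bar>)"
      unfolding T_def power_mult_distrib mult.assoc ..
    ultimately show ?thesis by simp
  qed
  have CI: "z powr (1 - real d / 2) * ck k * Mval \<mu> \<alpha> \<epsilon> (d - 1 + 2 * k) = Ch * T k" for k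
    unfolding ck_def Ch_def T_def lam_def by (rule coef_identity[OF d e mu a z])
  have zp: "z powr (1 - real d / 2) > 0" using z by simp
  have int: "integrable lborel (f k)" for k
    unfolding f_def by (intro integrable_mult_right Gm_integral[OF e a mu])
  have intf: "integral\<^sup>L lborel (f k) = ck k * Mval \<mu> \<alpha> \<epsilon> (d - 1 + 2 * k)" for k
    unfolding f_def using Gm_integral[OF e a mu] by simp
  have intabs: "(\<integral>y. norm (f k y) \<partial>lborel) = \<bar>Ch\<bar> / z powr (1 - real d / 2) * \<bar>T k\<bar>" for k
  proof -
    have "(\<integral>y. norm (f k y) \<partial>lborel) = (\<integral>y. \<bar>ck k\<bar> * Gm \<mu> \<alpha> \<epsilon> (d - 1 + 2 * k) y \<partial>lborel)"
      unfolding f_def using Gm_nonneg[OF e] by (simp add: abs_mult)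
    also have "\<dots> = \<bar>ck k\<bar> * Mval \<mu> \<alpha> \<epsilon> (d - 1 + 2 * k)"
      using Gm_integral[OF e a mu] by simp
    also have "\<dots> = \<bar>z powr (1 - real d / 2) * ck k * Mval \<mu> \<alpha> \<epsilon> (d - 1 + 2 * k)\<bar> / z powr (1 - real d / 2)"
    proof -
      have "\<bar>Mval \<mu> \<alpha> \<epsilon> (d - 1 + 2 * k)\<bar> = Mval \<mu> \<alpha> \<epsilon> (d - 1 + 2 * k)"
        using Mval_pos[OF e a mu] by (simp add: less_imp_le)
      then show ?thesis using zp by (simp add: abs_mult)
    qed
    also have "\<dots> = \<bar>Ch\<bar> / z powr (1 - real d / 2) * \<bar>T k\<bar>" unfolding CI by (simp add: abs_mult)
    finally show ?thesis .
  qed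
  have sabs: "summable (\<lambda>k. \<integral>y. norm (f k y) \<partial>lborel)"
    unfolding intabs by (intro summable_mult sT)
  have AEs: "AE y in lborel. summable (\<lambda>k. norm (f k y))"
  proof (rule AE_I2)
    fix y :: real
    have nu: "real d / 2 - 1 > -1" using d by simp
    have nu1: "real d / 2 - 1 + 1 = real d / 2" by simp
    have b: "summable (\<lambda>k. \<bar>(- (z\<^sup>2 * y\<^sup>2 / 4)) ^ k / (pochhammer (real d / 2) k * fact k)\<bar>)"
      using bessel_summable[OF nu, of "z\<^sup>2 * y\<^sup>2 / 4"] unfolding nu1 .
    have "norm (f k y) = \<bar>1 / (2 powr (\<alpha> - 1) * Gamma \<alpha>) * (z / 2) powr (real d / 2 - 1) * rGamma (real d / 2)
        * enn2real (NW \<mu> \<alpha> \<epsilon> y) * y ^ (d - 1)\<bar> * \<bar>(- (z\<^sup>2 * y\<^sup>2 / 4)) ^ k / (pochhammer (real d / 2) k * fact k)\<bar>" for k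
    proof -
      have "(- (z\<^sup>2 * y\<^sup>2 / 4)) ^ k = (- (z\<^sup>2 / 4)) ^ k * y ^ (2 * k)"
      proof -
        have h: "- (z\<^sup>2 * y\<^sup>2 / 4) = (- (z\<^sup>2 / 4)) * y\<^sup>2" by simp
        have "y ^ (2 * k) = (y\<^sup>2) ^ k" by (simp add: power_mult)
        then show ?thesis by (subst h) (simp only: power_mult_distrib)
      qed
      then have "ck k * (enn2real (NW \<mu> \<alpha> \<epsilon> y) * y ^ (d - 1 + 2 * k)) =
          (1 / (2 powr (\<alpha> - 1) * Gamma \<alpha>) * (z / 2) powr (real d / 2 - 1) * rGamma (real d / 2)
          * enn2real (NW \<mu> \<alpha> \<epsilon> y) * y ^ (d - 1)) * ((- (z\<^sup>2 * y\<^sup>2 / 4)) ^ k / (pochhammer (real d / 2) k * fact k))"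
        unfolding ck_def power_add by (simp add: mult_ac)
      then show ?thesis unfolding f_def Gm_def real_norm_def by (metis abs_mult)
    qed
    then show "summable (\<lambda>k. norm (f k y))"
      by (simp only:) (intro summable_mult b)
  qed
  have I: "(\<integral>y. (\<Sum>k. f k y) \<partial>lborel) = (\<Sum>k. ck k * Mval \<mu> \<alpha> \<epsilon> (d - 1 + 2 * k))"
    using integral_suminf[OF int AEs sabs] unfolding intf .
  have intS: "integrable lborel (\<lambda>y. \<Sum>k. f k y)" by (rule integrable_suminf[OF int AEs sabs])
  have h1: "((\<lambda>y. \<Sum>k. f k y) has_integral (\<Sum>k. ck k * Mval \<mu> \<alpha> \<epsilon> (d - 1 + 2 * k))) UNIV"
    using has_integral_integral_lborel[OF intS] unfolding I .
  have zero: "(\<Sum>k. f k y) = 0" if "y < 0" for y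
  proof -
    have "NW \<mu> \<alpha> \<epsilon> y = 0" using NW_zero[OF e] that by auto
    then show ?thesis unfolding f_def Gm_def by simp
  qed
  have eqf: "(\<lambda>y. if y \<in> {0..} then (\<Sum>k. f k y) else 0) = (\<lambda>y. \<Sum>k. f k y)"
    using zero by (auto simp: fun_eq_iff)
  have "((\<lambda>y. if y \<in> {0..} then (\<Sum>k. f k y) else 0) has_integral (\<Sum>k. ck k * Mval \<mu> \<alpha> \<epsilon> (d - 1 + 2 * k))) UNIV"
    unfolding eqf by (rule h1)
  then have h2: "((\<lambda>y. \<Sum>k. f k y) has_integral (\<Sum>k. ck k * Mval \<mu> \<alpha> \<epsilon> (d - 1 + 2 * k))) {0..}"
    unfolding has_integral_restrict_UNIV .
  obtain S where S: "negligible S" "\<And>y. \<not> NW \<mu> \<alpha> \<epsilon> y \<noteq> \<infinity> \<Longrightarrow> y \<in> S"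
    by (rule AE_negligible[OF NW_finite_AE[OF e a mu]]) auto
  have h3: "((\<lambda>y. wendland \<mu> \<alpha> \<epsilon> y * y powr (real d / 2) * besselJ (real d / 2 - 1) (y * z))
      has_integral (\<Sum>k. ck k * Mval \<mu> \<alpha> \<epsilon> (d - 1 + 2 * k))) {0..}"
  proof (rule has_integral_spike[OF _ _ h2])
    show "negligible (insert 0 S)" using S(1) by simp
    fix y assume y: "y \<in> {0..} - insert 0 S"
    then have "y > 0" "NW \<mu> \<alpha> \<epsilon> y \<noteq> \<infinity>" using S(2) by force+
    then show "wendland \<mu> \<alpha> \<epsilon> y * y powr (real d / 2) * besselJ (real d / 2 - 1) (y * z) = (\<Sum>k. f k y)"
      unfolding f_def ck_def by (rule FT_pointwise[OF d e z])
  qed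
  have "radial_FT d (wendland \<mu> \<alpha> \<epsilon>) z = z powr (1 - real d / 2) * (\<Sum>k. ck k * Mval \<mu> \<alpha> \<epsilon> (d - 1 + 2 * k))"
    unfolding radial_FT_def using integral_unique[OF h3] by simp
  also have "\<dots> = (\<Sum>k. z powr (1 - real d / 2) * (ck k * Mval \<mu> \<alpha> \<epsilon> (d - 1 + 2 * k)))"
  proof -
    have "summable (\<lambda>k. ck k * Mval \<mu> \<alpha> \<epsilon> (d - 1 + 2 * k))"
      using summable_integral[OF int AEs sabs] unfolding intf .
    then show ?thesis by (rule suminf_mult[symmetric])
  qed
  also have "\<dots> = (\<Sum>k. Ch * T k)" using CI by (simp add: mult.assoc)
  also have "\<dots> = Ch * (\<Sum>k. T k)"
    by (rule suminf_mult) (rule summable_rabs_cancel[OF sT])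
  finally show ?thesis unfolding T_def .
qed



lemma powr_int:
  fixes p r :: real
  assumes p: "p > -1" and r: "r \<ge> 0"
  shows "integrable lborel (\<lambda>z. indicator {0..r} z * z powr p)"
    "integral\<^sup>L lborel (\<lambda>z. indicator {0..r} z * z powr p) = r powr (p + 1) / (p + 1)"
proof -
  have hi: "((\<lambda>z. z powr p) has_integral (r powr (p + 1) / (p + 1))) {0..r}"
    by (rule has_integral_powr_from_0[OF p r])
  have "(\<integral>\<^sup>+z. ennreal (z powr p) * indicator {0..r} z \<partial>lborel) = ennreal (r powr (p + 1) / (p + 1))"
    by (rule nn_integral_has_integral_lebesgue'[OF _ hi]) simp
  moreover have "(\<integral>\<^sup>+z. ennreal (z powr p) * indicator {0..r} z \<partial>lborel) = (\<integral>\<^sup>+z. ennreal (indicator {0..r} z * z powr p) \<partial>lborel)"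
    by (intro nn_integral_cong) (simp split: split_indicator)
  ultimately have "(\<integral>\<^sup>+z. ennreal (indicator {0..r} z * z powr p) \<partial>lborel) = ennreal (r powr (p + 1) / (p + 1))" by simp
  moreover have "r powr (p + 1) / (p + 1) \<ge> 0" using p by simp
  ultimately have "integrable lborel (\<lambda>z. indicator {0..r} z * z powr p) \<and> integral\<^sup>L lborel (\<lambda>z. indicator {0..r} z * z powr p) = r powr (p + 1) / (p + 1)"
    by (subst nn_integral_eq_integrable[symmetric]) (auto simp: indicator_def)
  then show "integrable lborel (\<lambda>z. indicator {0..r} z * z powr p)"
    "integral\<^sup>L lborel (\<lambda>z. indicator {0..r} z * z powr p) = r powr (p + 1) / (p + 1)" by auto
qed

lemma zpow:
  fixes z a :: real
  assumes z: "z \<ge> 0" and a: "a > 0"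
  shows "z powr (a + 2 * real l + 2 * real n) = z powr a * (z\<^sup>2) ^ l * (z\<^sup>2) ^ n"
proof (cases "z = 0")
  case True
  then show ?thesis using a by simp
next
  case False
  with z have z: "z > 0" by simp
  have e: "z powr (2 * real j) = (z\<^sup>2) ^ j" for j
  proof -
    have "z powr (2 * real j) = z powr (real (2 * j))" by simp
    also have "\<dots> = z ^ (2 * j)" by (rule powr_realpow[OF z])
    also have "\<dots> = (z\<^sup>2) ^ j" by (simp add: power_mult)
    finally show ?thesis .
  qed
  show ?thesis by (simp only: powr_add e)
qed

lemma inner_series:
  fixes \<gamma> r :: real and l :: nat
  assumes g: "\<gamma> > 0" and r: "r > 0"
  defines "\<phi> \<equiv> \<lambda>n z. (bcoef \<gamma> n * (-1) ^ n) * (indicator {0..r} z * z powr (2 * \<gamma> + 1 + 2 * real l + 2 * real n))"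
  shows "integrable lborel (\<lambda>z. \<Sum>n. \<phi> n z)"
    and "integral\<^sup>L lborel (\<lambda>z. \<Sum>n. \<phi> n z) = (\<Sum>n. bcoef \<gamma> n * (-1) ^ n * (r powr (2 * \<gamma> + 2 + 2 * real l + 2 * real n) / (2 * \<gamma> + 2 + 2 * real l + 2 * real n)))"
    and "summable (\<lambda>n. bcoef \<gamma> n * (-1) ^ n * (r powr (2 * \<gamma> + 2 + 2 * real l + 2 * real n) / (2 * \<gamma> + 2 + 2 * real l + 2 * real n)))"
    and "\<And>z. (\<Sum>n. \<phi> n z) = indicator {0..r} z * ((z\<^sup>2) ^ l * z powr (2 * \<gamma> + 1) * (\<Sum>n. bcoef \<gamma> n * (- z\<^sup>2) ^ n))"
proof -
  define p where "p = (\<lambda>n::nat. 2 * \<gamma> + 1 + 2 * real l + 2 * real n)"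
  have pp: "p n > -1" for n using g by (simp add: p_def)
  have p1: "p n + 1 = 2 * \<gamma> + 2 + 2 * real l + 2 * real n" for n by (simp add: p_def)
  have int: "integrable lborel (\<phi> n)" for n
    unfolding \<phi>_def by (intro integrable_mult_right powr_int(1)) (use g r in auto)
  have intv: "integral\<^sup>L lborel (\<phi> n) = bcoef \<gamma> n * (-1) ^ n * (r powr (2 * \<gamma> + 2 + 2 * real l + 2 * real n) / (2 * \<gamma> + 2 + 2 * real l + 2 * real n))" for n
    unfolding \<phi>_def using powr_int(2)[OF pp[of n], of r] r unfolding p1 by (simp add: p_def)
  have iabs: "(\<integral>z. norm (\<phi> n z) \<partial>lborel) = \<bar>bcoef \<gamma> n\<bar> * (r powr (2 * \<gamma> + 2 + 2 * real l + 2 * real n) / (2 * \<gamma> + 2 + 2 * real l + 2 * real n))" for n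
  proof -
    have "(\<lambda>z. norm (\<phi> n z)) = (\<lambda>z. \<bar>bcoef \<gamma> n\<bar> * (indicator {0..r} z * z powr p n))"
      unfolding \<phi>_def p_def by (auto simp: fun_eq_iff abs_mult indicator_def)
    then show ?thesis using powr_int(2)[OF pp[of n], of r] r unfolding p1 by simp
  qed
  have sb: "summable (\<lambda>n. \<bar>bcoef \<gamma> n * (r\<^sup>2) ^ n\<bar>)" by (rule bcoef_summable[OF g])
  have sabs: "summable (\<lambda>n. \<integral>z. norm (\<phi> n z) \<partial>lborel)"
  proof (rule summable_comparison_test'[where g = "\<lambda>n. \<bar>bcoef \<gamma> n * (r\<^sup>2) ^ n\<bar> * (r powr (2 * \<gamma> + 2 + 2 * real l) / (2 * \<gamma> + 2))"])
    show "summable (\<lambda>n. \<bar>bcoef \<gamma> n * (r\<^sup>2) ^ n\<bar> * (r powr (2 * \<gamma> + 2 + 2 * real l) / (2 * \<gamma> + 2)))"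
      by (intro summable_mult2 sb)
    fix n
    have e: "r powr (2 * \<gamma> + 2 + 2 * real l + 2 * real n) = r powr (2 * \<gamma> + 2 + 2 * real l) * (r\<^sup>2) ^ n"
    proof -
      have "r powr (2 * \<gamma> + 2 + 2 * real l + 2 * real n) = r powr (2 * \<gamma> + 2) * (r\<^sup>2) ^ l * (r\<^sup>2) ^ n"
        by (rule zpow) (use r g in auto)
      moreover have "r powr (2 * \<gamma> + 2 + 2 * real l) = r powr (2 * \<gamma> + 2) * (r\<^sup>2) ^ l"
        using zpow[of r "2 * \<gamma> + 2" l 0] r g by simp
      ultimately show ?thesis by simp
    qed
    have le: "r powr (2 * \<gamma> + 2 + 2 * real l) * (r\<^sup>2) ^ n / (2 * \<gamma> + 2 + 2 * real l + 2 * real n)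
        \<le> r powr (2 * \<gamma> + 2 + 2 * real l) * (r\<^sup>2) ^ n / (2 * \<gamma> + 2)"
      using g r by (intro divide_left_mono) auto
    have "norm (\<integral>z. norm (\<phi> n z) \<partial>lborel) = \<bar>bcoef \<gamma> n\<bar> * (r powr (2 * \<gamma> + 2 + 2 * real l) * (r\<^sup>2) ^ n / (2 * \<gamma> + 2 + 2 * real l + 2 * real n))"
      unfolding iabs e using g r by (simp add: abs_mult)
    also have "\<dots> \<le> \<bar>bcoef \<gamma> n\<bar> * (r powr (2 * \<gamma> + 2 + 2 * real l) * (r\<^sup>2) ^ n / (2 * \<gamma> + 2))"
      by (intro mult_left_mono le) simp
    also have "\<dots> = \<bar>bcoef \<gamma> n * (r\<^sup>2) ^ n\<bar> * (r powr (2 * \<gamma> + 2 + 2 * real l) / (2 * \<gamma> + 2))"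
      by (simp add: abs_mult)
    finally show "norm (\<integral>z. norm (\<phi> n z) \<partial>lborel) \<le> \<bar>bcoef \<gamma> n * (r\<^sup>2) ^ n\<bar> * (r powr (2 * \<gamma> + 2 + 2 * real l) / (2 * \<gamma> + 2))" .
  qed
  have pt: "\<phi> n z = indicator {0..r} z * ((z\<^sup>2) ^ l * z powr (2 * \<gamma> + 1)) * (bcoef \<gamma> n * (- z\<^sup>2) ^ n)" for n z
  proof (cases "z \<in> {0..r}")
    case True
    then have zr: "0 \<le> z" by simp
    have ga: "2 * \<gamma> + 1 > 0" using g by simp
    have "z powr (2 * \<gamma> + 1 + 2 * real l + 2 * real n) = z powr (2 * \<gamma> + 1) * (z\<^sup>2) ^ l * (z\<^sup>2) ^ n"
      by (rule zpow[OF zr ga])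
    moreover have "(- z\<^sup>2) ^ n = (-1) ^ n * (z\<^sup>2) ^ n" by (rule power_minus)
    ultimately show ?thesis using True unfolding \<phi>_def by (simp add: mult_ac)
  qed (simp add: \<phi>_def)
  have AEs: "AE z in lborel. summable (\<lambda>n. norm (\<phi> n z))"
  proof (rule AE_I2)
    fix z :: real
    have "summable (\<lambda>n. \<bar>bcoef \<gamma> n * (- z\<^sup>2) ^ n\<bar>)" by (rule bcoef_summable[OF g])
    then show "summable (\<lambda>n. norm (\<phi> n z))"
      unfolding pt real_norm_def abs_mult[of "indicator {0..r} z * ((z\<^sup>2) ^ l * z powr (2 * \<gamma> + 1))"]
      by (rule summable_mult)
  qed
  show "integrable lborel (\<lambda>z. \<Sum>n. \<phi> n z)" by (rule integrable_suminf[OF int AEs sabs])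
  show "integral\<^sup>L lborel (\<lambda>z. \<Sum>n. \<phi> n z) = (\<Sum>n. bcoef \<gamma> n * (-1) ^ n * (r powr (2 * \<gamma> + 2 + 2 * real l + 2 * real n) / (2 * \<gamma> + 2 + 2 * real l + 2 * real n)))"
    using integral_suminf[OF int AEs sabs] unfolding intv .
  show "summable (\<lambda>n. bcoef \<gamma> n * (-1) ^ n * (r powr (2 * \<gamma> + 2 + 2 * real l + 2 * real n) / (2 * \<gamma> + 2 + 2 * real l + 2 * real n)))"
    using summable_integral[OF int AEs sabs] unfolding intv .
  fix z
  have s: "summable (\<lambda>n. bcoef \<gamma> n * (- z\<^sup>2) ^ n)" by (rule summable_rabs_cancel[OF bcoef_summable[OF g]])
  show "(\<Sum>n. \<phi> n z) = indicator {0..r} z * ((z\<^sup>2) ^ l * z powr (2 * \<gamma> + 1) * (\<Sum>n. bcoef \<gamma> n * (- z\<^sup>2) ^ n))"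
    unfolding pt suminf_mult[OF s] by (simp add: mult_ac)
qed





lemma poch_ratio:
  fixes a :: real
  shows "pochhammer a l * (a + real l) = a * pochhammer (a + 1) l"
proof -
  have "pochhammer a (Suc l) = a * pochhammer (a + 1) l" by (rule pochhammer_rec)
  moreover have "pochhammer a (Suc l) = pochhammer a l * (a + of_nat l)" by (simp add: pochhammer_rec')
  ultimately show ?thesis by simp
qed

lemma term_identity:
  fixes \<gamma> r \<epsilon> lam \<mu> :: real and l n :: nat
  assumes g: "\<gamma> > 0" and r: "r > 0" and e: "\<epsilon> > 0" and l: "lam > 1/2" and mu: "\<mu> > -1"
  shows "acoef lam \<mu> l * (- (1 / (4 * \<epsilon>\<^sup>2))) ^ l * (bcoef \<gamma> n * (-1) ^ n * (r powr (2 * \<gamma> + 2 + 2 * real l + 2 * real n) / (2 * \<gamma> + 2 + 2 * real l + 2 * real n)))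
    = (r powr (2 * (\<gamma> + 1)) / (2 * (\<gamma> + 1))) *
      (pochhammer (\<gamma> + 1) l * pochhammer lam l * (- (r\<^sup>2 / (4 * \<epsilon>\<^sup>2))) ^ l
        / (pochhammer (\<gamma> + 2) l * pochhammer (lam + \<mu> / 2) l * pochhammer (lam + (\<mu> + 1) / 2) l * fact l)) *
      (pochhammer (\<gamma> + 1 + real l) n * pochhammer (\<gamma> + 1 / 2) n
        / (pochhammer (\<gamma> + 2 + real l) n * pochhammer (\<gamma> + 1) n * pochhammer (2 * \<gamma> + 1) n) * (- (r\<^sup>2)) ^ n / fact n)"
proof -
  have l1: "lam + \<mu> / 2 > 0" "lam + (\<mu> + 1) / 2 > 0" "lam > 0" using l mu by (simp_all add: field_simps)
  have pos: "pochhammer (\<gamma> + 1) l > 0" "pochhammer (\<gamma> + 2) l > 0" "pochhammer (\<gamma> + 1 + real l) n > 0"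
    "pochhammer (\<gamma> + 2 + real l) n > 0" "pochhammer (\<gamma> + 1) n > 0" "pochhammer (2 * \<gamma> + 1) n > 0"
    "pochhammer (\<gamma> + 1 / 2) n > 0" "pochhammer lam l > 0"
    "pochhammer (lam + \<mu> / 2) l > 0" "pochhammer (lam + (\<mu> + 1) / 2) l > 0"
    using g l1 by (auto intro!: pochhammer_pos)
  have R1: "pochhammer (\<gamma> + 1) l * (\<gamma> + 1 + real l) = (\<gamma> + 1) * pochhammer (\<gamma> + 2) l"
    using poch_ratio[of "\<gamma> + 1" l] by (simp add: add.assoc)
  have R2: "pochhammer (\<gamma> + 1 + real l) n * (\<gamma> + 1 + real l + real n) = (\<gamma> + 1 + real l) * pochhammer (\<gamma> + 2 + real l) n"
    using poch_ratio[of "\<gamma> + 1 + real l" n] by (simp add: algebra_simps)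
  have P: "r powr (2 * \<gamma> + 2 + 2 * real l + 2 * real n) = r powr (2 * (\<gamma> + 1)) * (r\<^sup>2) ^ l * (r\<^sup>2) ^ n"
  proof -
    have "r powr (2 * (\<gamma> + 1) + 2 * real l + 2 * real n) = r powr (2 * (\<gamma> + 1)) * (r\<^sup>2) ^ l * (r\<^sup>2) ^ n"
      by (rule zpow) (use r g in auto)
    then show ?thesis by (simp add: algebra_simps)
  qed
  have Q1: "(- (r\<^sup>2 / (4 * \<epsilon>\<^sup>2))) ^ l = (- (1 / (4 * \<epsilon>\<^sup>2))) ^ l * (r\<^sup>2) ^ l"
  proof -
    have h: "- (r\<^sup>2 / (4 * \<epsilon>\<^sup>2)) = (- (1 / (4 * \<epsilon>\<^sup>2))) * r\<^sup>2" by simp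
    show ?thesis by (subst h) (rule power_mult_distrib)
  qed
  have Q2: "(- (r\<^sup>2)) ^ n = (-1) ^ n * (r\<^sup>2) ^ n" by (rule power_minus)
  have D1: "2 * \<gamma> + 2 + 2 * real l + 2 * real n = 2 * (\<gamma> + 1 + real l + real n)" by simp
  define A where "A = pochhammer (\<gamma> + 1 + real l) n"
  define B where "B = pochhammer (\<gamma> + 2 + real l) n"
  define E where "E = pochhammer (\<gamma> + 1) l"
  define F where "F = pochhammer (\<gamma> + 2) l"
  define Pl where "Pl = pochhammer lam l"
  define Q1 where "Q1 = pochhammer (lam + \<mu> / 2) l"
  define Q2 where "Q2 = pochhammer (lam + (\<mu> + 1) / 2) l"
  define Ph where "Ph = pochhammer (\<gamma> + 1 / 2) n"
  define Pg where "Pg = pochhammer (\<gamma> + 1) n"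
  define Pt where "Pt = pochhammer (2 * \<gamma> + 1) n"
  define fl where "fl = (fact l :: real)"
  define fn where "fn = (fact n :: real)"
  define R where "R = r powr (2 * (\<gamma> + 1))"
  define q where "q = - (1 / (4 * \<epsilon>\<^sup>2))"
  define s where "s = r\<^sup>2"
  define u where "u = \<gamma> + 1 + real l"
  define v where "v = \<gamma> + 1 + real l + real n"
  have nz: "A > 0" "B > 0" "E > 0" "F > 0" "Pl > 0" "Q1 > 0" "Q2 > 0" "Ph > 0" "Pg > 0" "Pt > 0" "fl > 0" "fn > 0"
    "u > 0" "v > 0" "\<gamma> + 1 > 0"
    using pos g unfolding A_def B_def E_def F_def Pl_def Q1_def Q2_def Ph_def Pg_def Pt_def fl_def fn_def u_def v_def
    by auto
  have EE: "E = F * (\<gamma> + 1) / u"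
    using R1 nz unfolding E_def F_def u_def by (simp add: field_simps)
  have AA: "A = B * u / v"
    using R2 nz unfolding A_def B_def u_def v_def by (simp add: field_simps)
  have D2: "2 * \<gamma> + 2 + 2 * real l + 2 * real n = 2 * v" unfolding v_def by simp
  define g1 where "g1 = \<gamma> + 1"
  have g1: "g1 > 0" using g by (simp add: g1_def)
  have goal0: "Pl / (Q1 * Q2 * fl) * q ^ l * (Ph / (Pg * Pt * fn) * (-1) ^ n * (R * s ^ l * s ^ n / (2 * v)))
    = (R / (2 * g1)) * (F * g1 / u * Pl * (q ^ l * s ^ l) / (F * Q1 * Q2 * fl)) *
      (B * u / v * Ph / (B * Pg * Pt) * ((-1) ^ n * s ^ n) / fn)"
    using nz g1 by (simp add: field_simps)
  have goal: "Pl / (Q1 * Q2 * fl) * q ^ l * (Ph / (Pg * Pt * fn) * (-1) ^ n * (R * s ^ l * s ^ n / (2 * v)))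
    = (R / (2 * (\<gamma> + 1))) * (E * Pl * (q ^ l * s ^ l) / (F * Q1 * Q2 * fl)) *
      (A * Ph / (B * Pg * Pt) * ((-1) ^ n * s ^ n) / fn)"
    using goal0 unfolding EE AA g1_def .
  show ?thesis
    unfolding acoef_def bcoef_def P Q1 Q2
    using goal unfolding A_def B_def E_def F_def Pl_def Q1_def Q2_def Ph_def Pg_def Pt_def fl_def fn_def R_def q_def s_def u_def v_def
    by simp
qed

lemma core:
  fixes d :: nat and \<epsilon> \<mu> \<alpha> \<gamma> r lam C :: real
  assumes d: "d \<ge> 1" and e: "\<epsilon> > 0" and mu: "\<mu> > -1" and a: "\<alpha> > 0" and g: "\<gamma> > 0" and r: "r > 0"
    and lam_def: "lam = (real d + 1) / 2 + \<alpha>"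
    and C_def: "C = 2 powr lam * Gamma lam * Gamma (\<mu> + 1) / Gamma (2 * lam + \<mu>)"
  shows "(2 * pi) powr (real d / 2) *
               integral {0..r} (\<lambda>z. z * (besselJ \<gamma> z)\<^sup>2 * radial_FT d (wendland \<mu> \<alpha> \<epsilon>) z)
             = (2 * pi) powr (real d / 2) *
               (C / ((2 powr \<gamma> * Gamma (\<gamma> + 1))\<^sup>2) / (sqrt (2 * pi) * \<epsilon> ^ d)) *
               (r powr (2 * (\<gamma> + 1)) / (2 * (\<gamma> + 1))) *
               (\<Sum>l. pochhammer (\<gamma> + 1) l * pochhammer lam l * (- (r\<^sup>2 / (4 * \<epsilon>\<^sup>2))) ^ l
                      / (pochhammer (\<gamma> + 2) l * pochhammer (lam + \<mu> / 2) l
                         * pochhammer (lam + (\<mu> + 1) / 2) l * fact l)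
                    * hypergeom [\<gamma> + 1 + real l, \<gamma> + 1 / 2]
                                [\<gamma> + 2 + real l, \<gamma> + 1, 2 * \<gamma> + 1] (- (r\<^sup>2)))"
proof -
  have l: "lam > 1/2" using a d unfolding lam_def by (simp add: field_simps)
  define Ch where "Ch = C / (sqrt (2 * pi) * \<epsilon> ^ d)"
  define P0 where "P0 = (rGamma (\<gamma> + 1))\<^sup>2 / 2 powr (2 * \<gamma>)"
  define q where "q = - (1 / (4 * \<epsilon>\<^sup>2))"
  define a where "a = (\<lambda>l. acoef lam \<mu> l * q ^ l)"
  define V where "V = (\<lambda>l::nat. \<Sum>n. bcoef \<gamma> n * (-1) ^ n * (r powr (2 * \<gamma> + 2 + 2 * real l + 2 * real n) / (2 * \<gamma> + 2 + 2 * real l + 2 * real n)))"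
  define Hs where "Hs = (\<lambda>z. \<Sum>n. bcoef \<gamma> n * (- z\<^sup>2) ^ n)"
  define \<Phi> where "\<Phi> = (\<lambda>(l::nat) z. \<Sum>n. (bcoef \<gamma> n * (-1) ^ n) * (indicator {0..r} z * z powr (2 * \<gamma> + 1 + 2 * real l + 2 * real n)))"
  have \<Phi>_int: "integrable lborel (\<Phi> l)" for l
    unfolding \<Phi>_def by (rule inner_series(1)[OF g r])
  have \<Phi>_val: "integral\<^sup>L lborel (\<Phi> l) = V l" for l
    unfolding \<Phi>_def V_def by (rule inner_series(2)[OF g r])
  have V_sum: "summable (\<lambda>n. bcoef \<gamma> n * (-1) ^ n * (r powr (2 * \<gamma> + 2 + 2 * real l + 2 * real n) / (2 * \<gamma> + 2 + 2 * real l + 2 * real n)))" for l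
    by (rule inner_series(3)[OF g r])
  have \<Phi>_pt: "\<Phi> l z = indicator {0..r} z * ((z\<^sup>2) ^ l * z powr (2 * \<gamma> + 1) * Hs z)" for l z
    unfolding \<Phi>_def Hs_def by (rule inner_series(4)[OF g r])
  define \<psi> where "\<psi> = (\<lambda>l z. (Ch * P0 * a l) * \<Phi> l z)"
  have int: "integrable lborel (\<psi> l)" for l
    unfolding \<psi>_def by (intro integrable_mult_right \<Phi>_int)
  have intv: "integral\<^sup>L lborel (\<psi> l) = Ch * P0 * a l * V l" for l
    unfolding \<psi>_def using \<Phi>_val by simp
  have sa: "summable (\<lambda>l. \<bar>a l * x ^ l\<bar>)" for x
  proof -
    have "summable (\<lambda>l. \<bar>acoef lam \<mu> l * (q * x) ^ l\<bar>)" by (rule acoef_summable[OF l mu])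
    moreover have "(\<lambda>l. \<bar>acoef lam \<mu> l * (q * x) ^ l\<bar>) = (\<lambda>l. \<bar>a l * x ^ l\<bar>)"
      unfolding a_def power_mult_distrib mult.assoc ..
    ultimately show ?thesis by simp
  qed
  have AEs: "AE z in lborel. summable (\<lambda>l. norm (\<psi> l z))"
  proof (rule AE_I2)
    fix z :: real
    have "norm (\<psi> l z) = \<bar>Ch * P0 * (indicator {0..r} z * (z powr (2 * \<gamma> + 1) * Hs z))\<bar> * \<bar>a l * (z\<^sup>2) ^ l\<bar>" for l
    proof -
      have "\<psi> l z = (Ch * P0 * (indicator {0..r} z * (z powr (2 * \<gamma> + 1) * Hs z))) * (a l * (z\<^sup>2) ^ l)"
        unfolding \<psi>_def \<Phi>_pt by (simp add: mult_ac)
      then show ?thesis unfolding real_norm_def by (metis abs_mult)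
    qed
    then show "summable (\<lambda>l. norm (\<psi> l z))"
      by (simp only:) (intro summable_mult sa)
  qed
  have \<Phi>0abs: "integrable lborel (\<lambda>z. \<bar>\<Phi> 0 z\<bar>)" using \<Phi>_int[of 0] by (rule integrable_abs)
  have bound: "norm (\<psi> l z) \<le> \<bar>Ch * P0\<bar> * \<bar>a l * (r\<^sup>2) ^ l\<bar> * \<bar>\<Phi> 0 z\<bar>" for l z
  proof (cases "z \<in> {0..r}")
    case True
    then have "(z\<^sup>2) ^ l \<le> (r\<^sup>2) ^ l" by (intro power_mono) (auto intro: power_mono)
    then have le: "(z\<^sup>2) ^ l \<le> (r\<^sup>2) ^ l" .
    have e1: "norm (\<psi> l z) = (\<bar>Ch * P0\<bar> * \<bar>a l\<bar>) * (z\<^sup>2) ^ l * \<bar>\<Phi> 0 z\<bar>"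
      unfolding \<psi>_def \<Phi>_pt using True by (simp add: abs_mult)
    have e2: "\<bar>Ch * P0\<bar> * \<bar>a l * (r\<^sup>2) ^ l\<bar> * \<bar>\<Phi> 0 z\<bar> = (\<bar>Ch * P0\<bar> * \<bar>a l\<bar>) * (r\<^sup>2) ^ l * \<bar>\<Phi> 0 z\<bar>"
      by (simp add: abs_mult)
    show ?thesis unfolding e1 e2 by (intro mult_right_mono mult_left_mono le) auto
  next
    case False
    then show ?thesis unfolding \<psi>_def \<Phi>_pt by simp
  qed
  have sabs: "summable (\<lambda>l. \<integral>z. norm (\<psi> l z) \<partial>lborel)"
  proof (rule summable_comparison_test'[where g = "\<lambda>l. \<bar>Ch * P0\<bar> * \<bar>a l * (r\<^sup>2) ^ l\<bar> * (\<integral>z. \<bar>\<Phi> 0 z\<bar> \<partial>lborel)"])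
    show "summable (\<lambda>l. \<bar>Ch * P0\<bar> * \<bar>a l * (r\<^sup>2) ^ l\<bar> * (\<integral>z. \<bar>\<Phi> 0 z\<bar> \<partial>lborel))"
      by (intro summable_mult2 summable_mult sa)
    fix l
    have "(\<integral>z. norm (\<psi> l z) \<partial>lborel) \<le> (\<integral>z. \<bar>Ch * P0\<bar> * \<bar>a l * (r\<^sup>2) ^ l\<bar> * \<bar>\<Phi> 0 z\<bar> \<partial>lborel)"
      by (intro integral_mono integrable_norm int integrable_mult_right \<Phi>0abs bound)
    also have "\<dots> = \<bar>Ch * P0\<bar> * \<bar>a l * (r\<^sup>2) ^ l\<bar> * (\<integral>z. \<bar>\<Phi> 0 z\<bar> \<partial>lborel)" by simp
    finally show "norm (\<integral>z. norm (\<psi> l z) \<partial>lborel) \<le> \<bar>Ch * P0\<bar> * \<bar>a l * (r\<^sup>2) ^ l\<bar> * (\<integral>z. \<bar>\<Phi> 0 z\<bar> \<partial>lborel)"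
      by simp
  qed
  have IS: "(\<integral>z. (\<Sum>l. \<psi> l z) \<partial>lborel) = (\<Sum>l. Ch * P0 * a l * V l)"
    using integral_suminf[OF int AEs sabs] unfolding intv .
  have intS: "integrable lborel (\<lambda>z. \<Sum>l. \<psi> l z)" by (rule integrable_suminf[OF int AEs sabs])
  have sumS: "summable (\<lambda>l. Ch * P0 * a l * V l)"
    using summable_integral[OF int AEs sabs] unfolding intv .
  have h1: "((\<lambda>z. \<Sum>l. \<psi> l z) has_integral (\<Sum>l. Ch * P0 * a l * V l)) UNIV"
    using has_integral_integral_lborel[OF intS] unfolding IS .
  have eqf: "(\<lambda>z. if z \<in> {0..r} then (\<Sum>l. \<psi> l z) else 0) = (\<lambda>z. \<Sum>l. \<psi> l z)"
    by (auto simp: fun_eq_iff \<psi>_def \<Phi>_pt)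
  have "((\<lambda>z. if z \<in> {0..r} then (\<Sum>l. \<psi> l z) else 0) has_integral (\<Sum>l. Ch * P0 * a l * V l)) UNIV"
    unfolding eqf by (rule h1)
  then have h2: "((\<lambda>z. \<Sum>l. \<psi> l z) has_integral (\<Sum>l. Ch * P0 * a l * V l)) {0..r}"
    unfolding has_integral_restrict_UNIV .
  have pt: "z * (besselJ \<gamma> z)\<^sup>2 * radial_FT d (wendland \<mu> \<alpha> \<epsilon>) z = (\<Sum>l. \<psi> l z)" if z: "z \<in> {0..r} - {0}" for z
  proof -
    from z have z0: "z > 0" and zr: "z \<in> {0..r}" by auto
    have J: "(besselJ \<gamma> z)\<^sup>2 = (z / 2) powr (2 * \<gamma>) * (rGamma (\<gamma> + 1))\<^sup>2 * Hs z"
      unfolding Hs_def by (rule besselJ_sq[OF g z0])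
    have FT: "radial_FT d (wendland \<mu> \<alpha> \<epsilon>) z = Ch * (\<Sum>k. a k * (z\<^sup>2) ^ k)"
      using FT_series[OF d e mu a z0] unfolding Ch_def C_def lam_def a_def q_def by simp
    have sz: "summable (\<lambda>k. a k * (z\<^sup>2) ^ k)" by (rule summable_rabs_cancel[OF sa])
    have zp: "z * (z / 2) powr (2 * \<gamma>) = z powr (2 * \<gamma> + 1) / 2 powr (2 * \<gamma>)"
    proof -
      have "(z / 2) powr (2 * \<gamma>) = z powr (2 * \<gamma>) / 2 powr (2 * \<gamma>)" using z0 by (simp add: powr_divide)
      moreover have "z * z powr (2 * \<gamma>) = z powr (2 * \<gamma> + 1)" using z0 by (simp add: powr_add)
      ultimately show ?thesis by simp
    qed
    have "(\<Sum>l. \<psi> l z) = (\<Sum>l. (Ch * P0 * z powr (2 * \<gamma> + 1) * Hs z) * (a l * (z\<^sup>2) ^ l))"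
      unfolding \<psi>_def \<Phi>_pt using zr by (simp add: mult_ac)
    also have "\<dots> = (Ch * P0 * z powr (2 * \<gamma> + 1) * Hs z) * (\<Sum>l. a l * (z\<^sup>2) ^ l)"
      by (rule suminf_mult[OF sz])
    also have "\<dots> = z * (besselJ \<gamma> z)\<^sup>2 * radial_FT d (wendland \<mu> \<alpha> \<epsilon>) z"
    proof -
      have "z * (besselJ \<gamma> z)\<^sup>2 * radial_FT d (wendland \<mu> \<alpha> \<epsilon>) z
          = (z * (z / 2) powr (2 * \<gamma>)) * (rGamma (\<gamma> + 1))\<^sup>2 * Hs z * (Ch * (\<Sum>k. a k * (z\<^sup>2) ^ k))"
        unfolding J FT by (simp add: mult_ac)
      then show ?thesis unfolding zp P0_def by (simp add: field_simps)
    qed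
    finally show ?thesis by simp
  qed
  have h3: "((\<lambda>z. z * (besselJ \<gamma> z)\<^sup>2 * radial_FT d (wendland \<mu> \<alpha> \<epsilon>) z) has_integral (\<Sum>l. Ch * P0 * a l * V l)) {0..r}"
    by (rule has_integral_spike[OF negligible_sing[of 0] _ h2]) (rule pt)
  have INT: "integral {0..r} (\<lambda>z. z * (besselJ \<gamma> z)\<^sup>2 * radial_FT d (wendland \<mu> \<alpha> \<epsilon>) z) = (\<Sum>l. Ch * P0 * a l * V l)"
    by (rule integral_unique[OF h3])
  define c where "c = r powr (2 * (\<gamma> + 1)) / (2 * (\<gamma> + 1))"
  define T where "T = (\<lambda>l. pochhammer (\<gamma> + 1) l * pochhammer lam l * (- (r\<^sup>2 / (4 * \<epsilon>\<^sup>2))) ^ l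
                      / (pochhammer (\<gamma> + 2) l * pochhammer (lam + \<mu> / 2) l
                         * pochhammer (lam + (\<mu> + 1) / 2) l * fact l))"
  define H where "H = (\<lambda>l::nat. hypergeom [\<gamma> + 1 + real l, \<gamma> + 1 / 2] [\<gamma> + 2 + real l, \<gamma> + 1, 2 * \<gamma> + 1] (- (r\<^sup>2)))"
  define h where "h = (\<lambda>(l::nat) n. pochhammer (\<gamma> + 1 + real l) n * pochhammer (\<gamma> + 1 / 2) n
        / (pochhammer (\<gamma> + 2 + real l) n * pochhammer (\<gamma> + 1) n * pochhammer (2 * \<gamma> + 1) n) * (- (r\<^sup>2)) ^ n / fact n)"
  have Hh: "H l = (\<Sum>n. h l n)" for l
    unfolding H_def h_def hypergeom_def by (simp add: mult.assoc)
  have c0: "c > 0" using r g unfolding c_def by simp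
  have T0: "T l \<noteq> 0" for l
  proof -
    have l1: "lam + \<mu> / 2 > 0" "lam + (\<mu> + 1) / 2 > 0" "lam > 0" using l mu by (simp_all add: field_simps)
    have "pochhammer (\<gamma> + 1) l > 0" "pochhammer lam l > 0" "pochhammer (\<gamma> + 2) l > 0"
      "pochhammer (lam + \<mu> / 2) l > 0" "pochhammer (lam + (\<mu> + 1) / 2) l > 0"
      using g l1 by (auto intro!: pochhammer_pos)
    moreover have "(- (r\<^sup>2 / (4 * \<epsilon>\<^sup>2))) ^ l \<noteq> 0" using r e by simp
    ultimately show ?thesis unfolding T_def by simp
  qed
  have TI: "a l * V l = c * (T l * H l)" for l
  proof -
    have "a l * V l = (\<Sum>n. a l * (bcoef \<gamma> n * (-1) ^ n * (r powr (2 * \<gamma> + 2 + 2 * real l + 2 * real n) / (2 * \<gamma> + 2 + 2 * real l + 2 * real n))))"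
      unfolding V_def by (rule suminf_mult[OF V_sum, symmetric])
    also have "\<dots> = (\<Sum>n. (c * T l) * h l n)"
      unfolding a_def q_def c_def T_def h_def by (intro suminf_cong) (rule term_identity[OF g r e l mu])
    also have "\<dots> = (c * T l) * (\<Sum>n. h l n)"
    proof (rule suminf_mult)
      have "summable (\<lambda>n. a l * (bcoef \<gamma> n * (-1) ^ n * (r powr (2 * \<gamma> + 2 + 2 * real l + 2 * real n) / (2 * \<gamma> + 2 + 2 * real l + 2 * real n))))"
        by (intro summable_mult V_sum)
      also have "(\<lambda>n. a l * (bcoef \<gamma> n * (-1) ^ n * (r powr (2 * \<gamma> + 2 + 2 * real l + 2 * real n) / (2 * \<gamma> + 2 + 2 * real l + 2 * real n))))
          = (\<lambda>n. (c * T l) * h l n)"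
        unfolding a_def q_def c_def T_def h_def by (intro ext) (rule term_identity[OF g r e l mu])
      finally have "summable (\<lambda>n. (c * T l) * h l n)" .
      then show "summable (h l)" using c0 T0[of l] by (simp add: summable_cmult_iff)
    qed
    finally show ?thesis unfolding Hh by (simp add: mult_ac)
  qed
  have Cpos: "C > 0"
  proof -
    have "lam > 0" "\<mu> + 1 > 0" "2 * lam + \<mu> > 0" using l mu by simp_all
    then show ?thesis unfolding C_def by simp
  qed
  have ChP0: "Ch * P0 = C / ((2 powr \<gamma> * Gamma (\<gamma> + 1))\<^sup>2) / (sqrt (2 * pi) * \<epsilon> ^ d)"
  proof -
    have "(2 powr \<gamma>)\<^sup>2 = 2 powr (2 * \<gamma>)" by (simp add: power2_eq_square powr_add[symmetric])
    then show ?thesis unfolding Ch_def P0_def by (simp add: rGamma_inverse_Gamma power_mult_distrib field_simps)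
  qed
  have ChP0nz: "Ch * P0 \<noteq> 0"
  proof -
    have "Gamma (\<gamma> + 1) > 0" using g by simp
    then show ?thesis unfolding ChP0 using Cpos e by simp
  qed
  have sTH: "summable (\<lambda>l. T l * H l)"
  proof -
    have "summable (\<lambda>l. (Ch * P0 * c) * (T l * H l))"
      using sumS unfolding mult.assoc TI by (simp add: mult_ac)
    then show ?thesis using ChP0nz c0 by (simp add: summable_cmult_iff)
  qed
  have "(\<Sum>l. Ch * P0 * a l * V l) = (\<Sum>l. (Ch * P0 * c) * (T l * H l))"
    by (intro suminf_cong) (simp add: mult.assoc TI)
  also have "\<dots> = (Ch * P0 * c) * (\<Sum>l. T l * H l)" by (rule suminf_mult[OF sTH])
  finally have "(\<Sum>l. Ch * P0 * a l * V l) = (Ch * P0) * c * (\<Sum>l. T l * H l)" by simp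
  then show ?thesis unfolding INT ChP0 c_def T_def H_def by (simp add: mult.assoc)
qed


theorem lemma4p2:
  fixes d :: nat and \<epsilon> \<mu> \<alpha> \<gamma> r :: real
  assumes "d \<ge> 1" and "\<epsilon> > 0" and "\<mu> > -1" and "\<alpha> > 0" and "\<gamma> > 0" and "r > 0"
  shows "(let lam = (real d + 1) / 2 + \<alpha>;
              C = 2 powr lam * Gamma lam * Gamma (\<mu> + 1) / Gamma (2 * lam + \<mu>)
          in (2 * pi) powr (real d / 2) *
               integral {0..r} (\<lambda>z. z * (besselJ \<gamma> z)\<^sup>2 * radial_FT d (wendland \<mu> \<alpha> \<epsilon>) z)
             = (2 * pi) powr (real d / 2) *
               (C / ((2 powr \<gamma> * Gamma (\<gamma> + 1))\<^sup>2) / (sqrt (2 * pi) * \<epsilon> ^ d)) *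
               (r powr (2 * (\<gamma> + 1)) / (2 * (\<gamma> + 1))) *
               (\<Sum>l. pochhammer (\<gamma> + 1) l * pochhammer lam l * (- (r\<^sup>2 / (4 * \<epsilon>\<^sup>2))) ^ l
                      / (pochhammer (\<gamma> + 2) l * pochhammer (lam + \<mu> / 2) l
                         * pochhammer (lam + (\<mu> + 1) / 2) l * fact l)
                    * hypergeom [\<gamma> + 1 + real l, \<gamma> + 1 / 2]
                                [\<gamma> + 2 + real l, \<gamma> + 1, 2 * \<gamma> + 1] (- (r\<^sup>2))))"
    unfolding Let_def by (rule core[OF assms refl refl])

end
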